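(* Let $n\ge 1$, let $Q:[0,\infty)\to\mathbb{C}^{n\times n}$ with $Q(x)=Q(x)^*$ and $\int_0^\infty (1+t)|Q(t)|\,dt<\infty$, and let $U$ be an $n\times n$ unitary matrix defining the selfadjoint operator $\mathcal{L}=-\frac{d^2}{dx^2}+Q$ on $L^2([0,\infty);\mathbb{C}^n)$ with boundary condition $\frac{i}{2}(U^*-\mathbb{I})f(0)+\frac12(U^*+\mathbb{I})f'(0)=0$; assume $\mathcal{L}$ has no virtual level at zero. Let $S(k)$ be the scattering matrix of $\mathcal{L}$ for real $k\ne0$. Then $$\lim_{k\to\infty}S(k)=\hat U$$ (limit along the real axis), where $\hat U$ is the unitary hermitian matrix obtained from $U$ by applying to its spectrum the map $z\mapsto 1$ for $z\in\mathbb{T}\setminus\{-1\}$ and $z\mapsto -1$ for $z=-1$ (i.e. $\hat U=\mathbb{I}-2P$ where $P$ is the orthogonal projection onto $\ker(U+\mathbb{I})$).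
   Context: $\mathbb{T}$ is the unit circle in $\mathbb{C}$. The Jost solution $F(x,k)$ ($\operatorname{Im}k\ge 0$) is the matrix solution of $-F''+QF=k^2F$ with $F(x,k)-e^{ikx}\mathbb{I}\to 0$ as $x\to\infty$. Put $A=\frac12(U+\mathbb{I})$, $B=\frac{i}{2}(U-\mathbb{I})$. For real $k\neq 0$ the scattering matrix is $$S(k)=-\Big[F(0,k)^*B-F_x(0,k)^*A\Big]\Big[F(0,-k)^*B-F_x(0,-k)^*A\Big]^{-1},$$ equivalently the unique matrix such that $\Psi(x,k)=F(x,-k)+F(x,k)S(k)$ solves $-\Psi''+Q\Psi=k^2\Psi$ and satisfies the boundary condition (namely $\Psi=\Xi M_-^{-1}$ with $\Xi(0)=A$, $\Xi_x(0)=B$). "No virtual level at zero" is the paper's standing assumption that zero is not a virtual level (in particular not an eigenvalue) of $\mathcal{L}$. *)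

theory Defs
  imports "HOL-Analysis.Analysis"
begin

type_synonym 'n cmat = "complex^'n^'n"

definition cadj :: "'n::finite cmat \<Rightarrow> 'n cmat" where
  "cadj M = (\<chi> i j. cnj (M $ j $ i))"

definition cinner :: "complex^'n::finite \<Rightarrow> complex^'n \<Rightarrow> complex" where
  "cinner x y = (\<Sum>i\<in>UNIV. x $ i * cnj (y $ i))"

definition unitary :: "'n::finite cmat \<Rightarrow> bool" where
  "unitary U \<longleftrightarrow> cadj U ** U = mat 1 \<and> U ** cadj U = mat 1"

definition bcA :: "'n::finite cmat \<Rightarrow> 'n cmat" where
  "bcA U = mat (1/2) ** (U + mat 1)"

definition bcB :: "'n::finite cmat \<Rightarrow> 'n cmat" where
  "bcB U = mat (\<i>/2) ** (U - mat 1)"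

definition kerUI :: "'n::finite cmat \<Rightarrow> (complex^'n) set" where
  "kerUI U = {v. (U + mat 1) *v v = 0}"

definition orth_proj_kerUI :: "'n::finite cmat \<Rightarrow> 'n cmat" where
  "orth_proj_kerUI U = (THE P. \<forall>v. P *v v \<in> kerUI U \<and>
       (\<forall>w\<in>kerUI U. cinner (v - P *v v) w = 0))"

definition Uhat :: "'n::finite cmat \<Rightarrow> 'n cmat" where
  "Uhat U = mat 1 - mat 2 ** orth_proj_kerUI U"

text \<open>\<open>psi\<close> is a (Caratheodory) solution on [0,\<infinity>) of -psi'' + Q psi = k^2 psi,
  with derivative \<open>psi'\<close>: psi is C^1 with derivative psi', and psi' is absolutely
  continuous with psi'' = (Q - k^2) psi almost everywhere (integral form).\<close>
definition vec_solution ::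
  "(real \<Rightarrow> 'n::finite cmat) \<Rightarrow> real \<Rightarrow> (real \<Rightarrow> complex^'n) \<Rightarrow> (real \<Rightarrow> complex^'n) \<Rightarrow> bool" where
  "vec_solution Q k psi psi' \<longleftrightarrow>
     (\<forall>x\<ge>0. (psi has_vector_derivative psi' x) (at x within {0..})) \<and>
     (\<forall>x\<ge>0. ((\<lambda>t. (Q t - mat (complex_of_real (k^2))) *v psi t) has_integral (psi' x - psi' 0)) {0..x})"

definition mat_solution ::
  "(real \<Rightarrow> 'n::finite cmat) \<Rightarrow> real \<Rightarrow> (real \<Rightarrow> 'n cmat) \<Rightarrow> (real \<Rightarrow> 'n cmat) \<Rightarrow> bool" where
  "mat_solution Q k F F' \<longleftrightarrow>
     (\<forall>x\<ge>0. (F has_vector_derivative F' x) (at x within {0..})) \<and>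
     (\<forall>x\<ge>0. ((\<lambda>t. (Q t - mat (complex_of_real (k^2))) ** F t) has_integral (F' x - F' 0)) {0..x})"

definition is_jost :: "(real \<Rightarrow> 'n::finite cmat) \<Rightarrow> real \<Rightarrow> (real \<Rightarrow> 'n cmat) \<Rightarrow> (real \<Rightarrow> 'n cmat) \<Rightarrow> bool" where
  "is_jost Q k F F' \<longleftrightarrow> mat_solution Q k F F' \<and>
     ((\<lambda>x. F x - mat (exp (\<i> * complex_of_real (k * x)))) \<longlongrightarrow> 0) at_top"

definition bc_holds :: "'n::finite cmat \<Rightarrow> complex^'n \<Rightarrow> complex^'n \<Rightarrow> bool" where
  "bc_holds U f0 f0' \<longleftrightarrow>
     (mat (\<i>/2) ** (cadj U - mat 1)) *v f0 + (mat (1/2) ** (cadj U + mat 1)) *v f0' = 0"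

text \<open>Zero is a virtual level of L: there is a nontrivial bounded solution of
  -psi'' + Q psi = 0 on [0,\<infinity>) satisfying the boundary condition
  (this includes the case that 0 is an eigenvalue).\<close>
definition virtual_level_zero :: "(real \<Rightarrow> 'n::finite cmat) \<Rightarrow> 'n cmat \<Rightarrow> bool" where
  "virtual_level_zero Q U \<longleftrightarrow> (\<exists>psi psi'. vec_solution Q 0 psi psi' \<and>
       bounded (psi ` {0..}) \<and> (\<exists>x\<ge>0. psi x \<noteq> 0) \<and> bc_holds U (psi 0) (psi' 0))"

definition scattering ::
  "'n::finite cmat \<Rightarrow> (real \<Rightarrow> real \<Rightarrow> 'n cmat) \<Rightarrow> (real \<Rightarrow> real \<Rightarrow> 'n cmat) \<Rightarrow> real \<Rightarrow> 'n cmat" where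
  "scattering U F Fx k =
     - ((cadj (F 0 k) ** bcB U - cadj (Fx 0 k) ** bcA U) **
        matrix_inv (cadj (F 0 (-k)) ** bcB U - cadj (Fx 0 (-k)) ** bcA U))"

end

theory Submission
  imports Defs "HOL-Analysis.Analysis"
begin


lemma sigma_finite_lebesgue: "sigma_finite_measure (lebesgue :: real measure)"
proof
  show "\<exists>A::real set set. countable A \<and> A \<subseteq> sets lebesgue \<and> \<Union>A = space lebesgue \<and> (\<forall>a\<in>A. emeasure lebesgue a \<noteq> \<infinity>)"
  proof (intro exI[of _ "range (\<lambda>n::nat. {- real n .. real n})"] conjI)
    show "\<Union> (range (\<lambda>n::nat. {- real n..real n})) = space lebesgue"
    proof (auto)
      fix x :: real
      obtain n :: nat where "\<bar>x\<bar> \<le> real n" using real_arch_simple by blast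
      then show "\<exists>n. - real n \<le> x \<and> x \<le> real n" by (intro exI[of _ n]) auto
    qed
  qed auto
qed

lemma fubini_tri:
  fixes g h :: "real \<Rightarrow> complex"
  assumes ab: "a \<le> b" and g: "g absolutely_integrable_on {a..b}" and h: "continuous_on {a..b} h"
  shows "integral {a..b} (\<lambda>t. h t * integral {a..t} g) = integral {a..b} (\<lambda>s. g s * integral {s..b} h)"
proof -
  interpret P: pair_sigma_finite "lebesgue :: real measure" "lborel :: real measure"
    by (simp add: pair_sigma_finite_def sigma_finite_lebesgue sigma_finite_lborel)
  define g0 where "g0 s = indicator {a..b} s *\<^sub>R g s" for s
  define h0 where "h0 t = indicator {a..b} t *\<^sub>R h t" for t
  define \<phi> where "\<phi> s t = (if s \<le> t then g0 s * h0 t else 0)" for s t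
  have g0i: "integrable lebesgue g0" using g unfolding set_integrable_def g0_def .
  have g0m[measurable]: "g0 \<in> borel_measurable lebesgue" using g0i by (rule borel_measurable_integrable)
  have h0m: "h0 \<in> borel_measurable borel" unfolding h0_def
    by (rule borel_measurable_continuous_on_indicator) (auto simp: h)
  have h0m'[measurable]: "h0 \<in> borel_measurable lborel" using h0m by simp
  have idm[measurable]: "(\<lambda>x::real. x) \<in> borel_measurable lebesgue" by (rule measurable_completion) simp
  have \<phi>m[measurable]: "case_prod \<phi> \<in> borel_measurable (lebesgue \<Otimes>\<^sub>M lborel)" unfolding \<phi>_def by measurable
  have hcomp: "integrable lborel (\<lambda>t. indicator {c..b} t *\<^sub>R h t)" if "a \<le> c" for c
    by (rule borel_integrable_compact) (use h that in \<open>auto intro: continuous_on_subset\<close>)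
  have phis: "\<phi> s t = g0 s * (indicator {max a s..b} t *\<^sub>R h t)" for s t
    by (auto simp: \<phi>_def g0_def h0_def indicator_def)
  have int2: "integrable lborel (\<lambda>t. \<phi> s t)" for s
    unfolding phis by (intro integrable_mult_right hcomp) auto
  define Cst where "Cst = (\<integral>t. norm (indicator {a..b} t *\<^sub>R h t) \<partial>lborel)"
  have cbound: "(\<integral>t. norm (indicator {max a s..b} t *\<^sub>R h t) \<partial>lborel) \<le> Cst" for s
    unfolding Cst_def
    by (intro integral_mono integrable_norm hcomp) (auto simp: indicator_def)
  have int1: "integrable lebesgue (\<lambda>s. \<integral>t. norm (\<phi> s t) \<partial>lborel)"
  proof (rule Bochner_Integration.integrable_bound)
    show "integrable lebesgue (\<lambda>s. norm (g0 s) * Cst)"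
      using g0i by (intro integrable_mult_left integrable_norm)
    show "(\<lambda>s. \<integral>t. norm (\<phi> s t) \<partial>lborel) \<in> borel_measurable lebesgue"
      by measurable
    show "AE s in lebesgue. norm (\<integral>t. norm (\<phi> s t) \<partial>lborel) \<le> norm (norm (g0 s) * Cst)"
    proof (rule AE_I2)
      fix s
      have "(\<integral>t. norm (\<phi> s t) \<partial>lborel) = norm (g0 s) * (\<integral>t. norm (indicator {max a s..b} t *\<^sub>R h t) \<partial>lborel)"
        unfolding phis norm_mult by simp
      moreover have "0 \<le> (\<integral>t. norm (indicator {max a s..b} t *\<^sub>R h t) \<partial>lborel)" by simp
      ultimately show "norm (\<integral>t. norm (\<phi> s t) \<partial>lborel) \<le> norm (norm (g0 s) * Cst)"
        using cbound[of s] by (simp add: mult_left_mono abs_mult)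
    qed
  qed
  have intP: "integrable (lebesgue \<Otimes>\<^sub>M lborel) (case_prod \<phi>)"
    by (rule P.Fubini_integrable) (use int1 int2 in auto)
  have eq: "(\<integral>t. (\<integral>s. \<phi> s t \<partial>lebesgue) \<partial>lborel) = (\<integral>s. (\<integral>t. \<phi> s t \<partial>lborel) \<partial>lebesgue)"
    by (rule P.Fubini_integral[OF intP])
  have inner_t: "(\<integral>s. \<phi> s t \<partial>lebesgue) = (if t \<in> {a..b} then h t * integral {a..t} g else 0)" for t
  proof (cases "t \<in> {a..b}")
    case True
    have e: "\<phi> s t = (indicator {a..t} s *\<^sub>R g s) * h t" for s
      using True by (auto simp: \<phi>_def g0_def h0_def indicator_def)
    have "(\<integral>s. \<phi> s t \<partial>lebesgue) = (\<integral>s. (indicator {a..t} s *\<^sub>R g s) * h t \<partial>lebesgue)"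
      using e by (intro Bochner_Integration.integral_cong) auto
    also have "\<dots> = (\<integral>s. indicator {a..t} s *\<^sub>R g s \<partial>lebesgue) * h t"
      by (rule integral_mult_left_zero)
    also have "(\<integral>s. indicator {a..t} s *\<^sub>R g s \<partial>lebesgue) = integral {a..t} g"
      using set_lebesgue_integral_eq_integral(2)[OF absolutely_integrable_on_subinterval[OF g, of a t]] True
      by (simp add: set_lebesgue_integral_def)
    finally show ?thesis using True by (simp add: mult.commute)
  next
    case False
    then have "\<phi> s t = 0" for s by (auto simp: \<phi>_def h0_def)
    then show ?thesis using False by auto
  qed
  have inner_s: "(\<integral>t. \<phi> s t \<partial>lborel) = (if s \<in> {a..b} then g s * integral {s..b} h else 0)" for s
  proof (cases "s \<in> {a..b}")
    case True
    have "(\<integral>t. \<phi> s t \<partial>lborel) = g0 s * (\<integral>t. indicator {max a s..b} t *\<^sub>R h t \<partial>lborel)"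
      unfolding phis by (rule integral_mult_right_zero)
    also have "(\<integral>t. indicator {max a s..b} t *\<^sub>R h t \<partial>lborel) = integral {s..b} h"
      using set_borel_integral_eq_integral(2)[of "{s..b}" h] hcomp[of s] True
      by (simp add: set_lebesgue_integral_def set_integrable_def)
    finally show ?thesis using True by (simp add: g0_def)
  next
    case False
    then show ?thesis unfolding phis by (auto simp: g0_def)
  qed
  have i1: "integrable lborel (\<lambda>t. \<integral>s. \<phi> s t \<partial>lebesgue)"
    by (rule P.integrable_snd[OF intP])
  have i2: "integrable lebesgue (\<lambda>s. \<integral>t. \<phi> s t \<partial>lborel)"
    by (rule P.integrable_fst[OF intP])
  have "((\<lambda>t. \<integral>s. \<phi> s t \<partial>lebesgue) has_integral (\<integral>t. (\<integral>s. \<phi> s t \<partial>lebesgue) \<partial>lborel)) UNIV"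
    by (rule has_integral_integral_lborel[OF i1])
  then have A: "((\<lambda>t. h t * integral {a..t} g) has_integral (\<integral>t. (\<integral>s. \<phi> s t \<partial>lebesgue) \<partial>lborel)) {a..b}"
    unfolding inner_t has_integral_restrict_UNIV .
  have "((\<lambda>s. \<integral>t. \<phi> s t \<partial>lborel) has_integral (\<integral>s. (\<integral>t. \<phi> s t \<partial>lborel) \<partial>lebesgue)) UNIV"
    by (rule has_integral_integral_lebesgue[OF i2])
  then have B: "((\<lambda>s. g s * integral {s..b} h) has_integral (\<integral>s. (\<integral>t. \<phi> s t \<partial>lborel) \<partial>lebesgue)) {a..b}"
    unfolding inner_s has_integral_restrict_UNIV .
  show ?thesis using A B eq by (simp add: integral_unique)
qed

lemma ibp_abs:
  fixes g H h G :: "real \<Rightarrow> complex"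
  assumes ab: "a \<le> b" and g: "g absolutely_integrable_on {a..b}"
    and H: "\<And>t. t \<in> {a..b} \<Longrightarrow> (H has_vector_derivative h t) (at t within {a..b})"
    and hc: "continuous_on {a..b} h"
    and G: "\<And>t. t \<in> {a..b} \<Longrightarrow> G t = G a + integral {a..t} g"
  shows "((\<lambda>t. H t * g t) has_integral (H b * G b - H a * G a - integral {a..b} (\<lambda>t. h t * G t))) {a..b}"
proof -
  have Hc: "continuous_on {a..b} H" using H by (rule continuous_on_vector_derivative)
  have gi: "g integrable_on {a..b}" using set_lebesgue_integral_eq_integral(1)[OF g] .
  have Gc: "continuous_on {a..b} (\<lambda>t. integral {a..t} g)" by (rule indefinite_integral_continuous_1[OF gi])
  have FT: "integral {s..b} h = H b - H s" if s: "s \<in> {a..b}" for s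
  proof -
    have "(h has_integral (H b - H s)) {s..b}"
    proof (rule fundamental_theorem_of_calculus)
      show "s \<le> b" using s by simp
      fix x assume x: "x \<in> {s..b}"
      then have "x \<in> {a..b}" "{s..b} \<subseteq> {a..b}" using s by auto
      then show "(H has_vector_derivative h x) (at x within {s..b})"
        using has_vector_derivative_within_subset[OF H] by blast
    qed
    then show ?thesis by (rule integral_unique)
  qed
  have gH: "(\<lambda>t. H t * g t) absolutely_integrable_on {a..b}"
  proof (rule absolutely_integrable_bounded_measurable_product[OF bilinear_times])
    show "H \<in> borel_measurable (lebesgue_on {a..b})"
      by (rule continuous_imp_measurable_on_sets_lebesgue[OF Hc]) simp
    show "bounded (H ` {a..b})"
      by (rule compact_imp_bounded[OF compact_continuous_image[OF Hc]]) simp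
  qed (auto simp: g)
  have gHi: "(\<lambda>t. H t * g t) integrable_on {a..b}" using set_lebesgue_integral_eq_integral(1)[OF gH] .
  have fub: "integral {a..b} (\<lambda>t. h t * integral {a..t} g) = integral {a..b} (\<lambda>s. g s * integral {s..b} h)"
    by (rule fubini_tri[OF ab g hc])
  have F1: "integral {a..b} (\<lambda>s. g s * integral {s..b} h) = integral {a..b} g * H b - integral {a..b} (\<lambda>t. H t * g t)"
  proof -
    have "integral {a..b} (\<lambda>s. g s * integral {s..b} h) = integral {a..b} (\<lambda>s. g s * H b - H s * g s)"
      by (intro integral_cong) (auto simp: FT algebra_simps)
    also have "\<dots> = integral {a..b} g * H b - integral {a..b} (\<lambda>t. H t * g t)"
      by (intro integral_unique has_integral_diff has_integral_mult_left integrable_integral gi gHi)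
    finally show ?thesis .
  qed
  have hGi: "(\<lambda>t. h t * integral {a..t} g) integrable_on {a..b}"
    by (intro integrable_continuous_interval continuous_intros hc Gc)
  have F2: "integral {a..b} (\<lambda>t. h t * G t) = (H b - H a) * G a + integral {a..b} (\<lambda>t. h t * integral {a..t} g)"
  proof -
    have "integral {a..b} (\<lambda>t. h t * G t) = integral {a..b} (\<lambda>t. h t * G a + h t * integral {a..t} g)"
    proof (intro integral_cong)
      fix t assume t: "t \<in> {a..b}"
      have "G t = G a + integral {a..t} g" by (rule G[OF t])
      then show "h t * G t = h t * G a + h t * integral {a..t} g" by (simp add: distrib_left)
    qed
    also have "\<dots> = (H b - H a) * G a + integral {a..b} (\<lambda>t. h t * integral {a..t} g)"
    proof (intro integral_unique has_integral_add has_integral_mult_left integrable_integral hGi)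
      show "(h has_integral H b - H a) {a..b}" by (rule fundamental_theorem_of_calculus[OF ab H])
    qed
    finally show ?thesis .
  qed
  have Gb: "G b = G a + integral {a..b} g" using G[of b] ab by simp
  have "integral {a..b} (\<lambda>t. H t * g t) = H b * G b - H a * G a - integral {a..b} (\<lambda>t. h t * G t)"
  proof -
    have "integral {a..b} (\<lambda>t. H t * g t) = integral {a..b} g * H b - integral {a..b} (\<lambda>t. h t * integral {a..t} g)"
      using F1 fub by simp
    then show ?thesis unfolding F2 Gb by (simp add: algebra_simps)
  qed
  then show ?thesis using integrable_integral[OF gHi] by simp
qed



lemma exp_vd:
  fixes z :: complex
  shows "((\<lambda>t. exp (of_real t * z)) has_vector_derivative (z * exp (of_real t * z))) (at t within S)"
proof -
  have "((\<lambda>w. exp (w * z)) has_field_derivative (exp (of_real t * z) * z)) (at (of_real t))"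
    by (auto intro!: derivative_eq_intros)
  from has_vector_derivative_real_field[OF this] show ?thesis by (simp add: mult.commute)
qed

lemma entry_identity:
  fixes f f' gq :: "real \<Rightarrow> complex" and z :: complex and k :: real
  assumes z2: "z^2 = - of_real (k^2)"
    and fd: "\<And>x. x \<ge> 0 \<Longrightarrow> (f has_vector_derivative f' x) (at x within {0..})"
    and fi: "\<And>x. x \<ge> 0 \<Longrightarrow> ((\<lambda>t. gq t - of_real (k^2) * f t) has_integral (f' x - f' 0)) {0..x}"
    and gabs: "\<And>x. x \<ge> 0 \<Longrightarrow> gq absolutely_integrable_on {0..x}"
    and a: "0 \<le> a" "a \<le> b"
  shows "((\<lambda>t. exp (of_real t * z) * gq t) has_integral
          (exp (of_real b * z) * (f' b - z * f b) - exp (of_real a * z) * (f' a - z * f a))) {a..b}"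
proof -
  define H where "H t = exp (of_real t * z)" for t
  define g where "g t = gq t - of_real (k^2) * f t" for t
  have Hd: "(H has_vector_derivative z * H t) (at t within S)" for t S
    unfolding H_def by (rule exp_vd)
  have Hc: "continuous_on S H" for S
    by (rule continuous_on_vector_derivative) (rule Hd)
  have fc0: "continuous_on {0..} f" by (rule continuous_on_vector_derivative) (use fd in auto)
  have fc: "continuous_on {a..b} f" by (rule continuous_on_subset[OF fc0]) (use a in auto)
  have gabs2: "g absolutely_integrable_on {a..b}"
  proof -
    have "gq absolutely_integrable_on {a..b}"
      by (rule absolutely_integrable_on_subinterval[OF gabs[of b]]) (use a in auto)
    moreover have "(\<lambda>t. of_real (k^2) * f t) absolutely_integrable_on {a..b}"
    proof -
      have c: "continuous_on {a..b} (\<lambda>t. of_real (k^2) * f t)" by (intro continuous_intros fc)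
      then show ?thesis using absolutely_integrable_continuous[of a b "\<lambda>t. of_real (k^2) * f t"]
        by (simp add: cbox_interval)
    qed
    ultimately show ?thesis unfolding g_def by (rule set_integral_diff(1))
  qed
  have gi0: "g integrable_on {0..t}" if "t \<ge> 0" for t
    using fi[OF that] unfolding g_def by blast
  have Ieq: "integral {0..t} g = f' t - f' 0" if "t \<ge> 0" for t
    using fi[OF that] unfolding g_def by (rule integral_unique)
  have G: "f' t = f' a + integral {a..t} g" if t: "t \<in> {a..b}" for t
  proof -
    have "integral {0..a} g + integral {a..t} g = integral {0..t} g"
      using Henstock_Kurzweil_Integration.integral_combine[where a=0 and c=a and b=t and f=g] t a gi0[of t] by auto
    then show ?thesis using Ieq[of a] Ieq[of t] t a by auto
  qed
  have f'c: "continuous_on {a..b} f'"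
  proof -
    have "continuous_on {a..b} (\<lambda>t. f' a + integral {a..t} g)"
      by (intro continuous_intros indefinite_integral_continuous_1 set_lebesgue_integral_eq_integral(1)[OF gabs2])
    then show ?thesis by (rule continuous_on_eq) (metis G)
  qed
  have I1: "((\<lambda>t. H t * g t) has_integral (H b * f' b - H a * f' a - integral {a..b} (\<lambda>t. z * H t * f' t))) {a..b}"
    by (rule ibp_abs[OF a(2) gabs2 Hd]) (auto intro!: continuous_intros Hc G)
  have I2: "((\<lambda>t. - z * (f t * (z * H t) + f' t * H t)) has_integral
            ((- z * f b * H b) - (- z * f a * H a))) {a..b}"
  proof -
    have "((\<lambda>t. - z * (f t * (z * H t) + f' t * H t)) has_integral ((- z * (f b * H b)) - (- z * (f a * H a)))) {a..b}"
    proof (rule fundamental_theorem_of_calculus[OF a(2)])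
      fix t assume t: "t \<in> {a..b}"
      have "(f has_vector_derivative f' t) (at t within {a..b})"
        by (rule has_vector_derivative_within_subset[OF fd]) (use t a in auto)
      then show "((\<lambda>t. - z * (f t * H t)) has_vector_derivative - z * (f t * (z * H t) + f' t * H t)) (at t within {a..b})"
        by (auto intro!: derivative_eq_intros Hd)
    qed
    then show ?thesis by (simp add: mult.assoc)
  qed
  have I3: "((\<lambda>t. z * H t * f' t) has_integral integral {a..b} (\<lambda>t. z * H t * f' t)) {a..b}"
    by (intro integrable_integral integrable_continuous_interval continuous_intros Hc f'c)
  have "((\<lambda>t. H t * g t + (- z * (f t * (z * H t) + f' t * H t) + z * H t * f' t)) has_integral
        ((H b * f' b - H a * f' a - integral {a..b} (\<lambda>t. z * H t * f' t)) +
         (((- z * f b * H b) - (- z * f a * H a)) + integral {a..b} (\<lambda>t. z * H t * f' t)))) {a..b}"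
    by (intro has_integral_add I1 I2 I3)
  moreover have "H t * g t + (- z * (f t * (z * H t) + f' t * H t) + z * H t * f' t) = H t * gq t" for t
  proof -
    have "- z * (f t * (z * H t)) = - (z^2) * f t * H t" by (simp add: power2_eq_square algebra_simps)
    then have "- z * (f t * (z * H t)) = of_real (k^2) * f t * H t" by (simp add: z2)
    then show ?thesis unfolding g_def by (simp add: algebra_simps)
  qed
  ultimately show ?thesis unfolding H_def by (simp add: algebra_simps)
qed


lemma exp_i_sq: "(exp (\<i> * of_real t))^2 = exp (\<i> * of_real (2 * t))"
proof -
  have "(exp (\<i> * of_real t))^2 = exp (2 * (\<i> * of_real t))" by (rule exp_double[symmetric])
  also have "2 * (\<i> * of_real t) = \<i> * of_real (2 * t)" by simp
  finally show ?thesis .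
qed

lemma e_sq1: "(exp (\<i> * of_real (k * (real n * pi / \<bar>k\<bar>))))^2 = (1::complex)" if "k \<noteq> 0" for k :: real
proof -
  have "(exp (\<i> * of_real (k * (real n * pi / \<bar>k\<bar>))))^2 = exp (\<i> * of_real (2 * k * (real n * pi / \<bar>k\<bar>)))"
    unfolding exp_i_sq by (simp add: algebra_simps)
  also have "2 * k * (real n * pi / \<bar>k\<bar>) = (if k > 0 then 1 else -1) * (real (2*n) * pi)"
    using that by (auto simp: field_simps)
  also have "exp (\<i> * of_real ((if k > 0 then 1 else -1) * (real (2*n) * pi))) = 1"
  proof -
    have "cos ((if k > 0 then 1 else -1) * (real (2*n) * pi)) = 1"
      by (simp only: cos_npi mult_minus_left cos_minus if_distrib if_distribR mult_1) simp
    moreover have "sin ((if k > 0 then 1 else -1) * (real (2*n) * pi)) = 0"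
      by (simp only: sin_npi mult_minus_left sin_minus if_distrib if_distribR mult_1) simp
    ultimately show ?thesis unfolding cis_conv_exp[symmetric] by (simp add: complex_eq_iff)
  qed
  finally show ?thesis .
qed

lemma e_sq2: "(exp (\<i> * of_real (k * ((real n + 1/2) * pi / \<bar>k\<bar>))))^2 = (-1::complex)" if "k \<noteq> 0" for k :: real
proof -
  have "(exp (\<i> * of_real (k * ((real n + 1/2) * pi / \<bar>k\<bar>))))^2 = exp (\<i> * of_real (2 * k * ((real n + 1/2) * pi / \<bar>k\<bar>)))"
    unfolding exp_i_sq by (simp add: algebra_simps)
  also have "2 * k * ((real n + 1/2) * pi / \<bar>k\<bar>) = (if k > 0 then 1 else -1) * (real (2*n+1) * pi)"
    using that by (auto simp: field_simps)
  also have "exp (\<i> * of_real ((if k > 0 then 1 else -1) * (real (2*n+1) * pi))) = -1"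
  proof -
    have "cos ((if k > 0 then 1 else -1) * (real (2*n+1) * pi)) = -1"
      by (simp only: cos_npi mult_minus_left cos_minus if_distrib if_distribR mult_1) simp
    moreover have "sin ((if k > 0 then 1 else -1) * (real (2*n+1) * pi)) = 0"
      by (simp only: sin_npi mult_minus_left sin_minus if_distrib if_distribR mult_1) simp
    ultimately show ?thesis unfolding cis_conv_exp[symmetric] by (simp add: complex_eq_iff)
  qed
  finally show ?thesis .
qed

lemma half_tri1: "cmod ((X + Y) / 2) \<le> (cmod X + cmod Y) / 2"
proof -
  have "cmod ((X + Y) / 2) = cmod (X + Y) / 2" by (simp add: norm_divide)
  also have "\<dots> \<le> (cmod X + cmod Y) / 2" by (intro divide_right_mono norm_triangle_ineq) simp
  finally show ?thesis .
qed

lemma half_tri2: "cmod ((X - Y) / 2) \<le> (cmod X + cmod Y) / 2"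
proof -
  have "cmod ((X - Y) / 2) = cmod (X - Y) / 2" by (simp add: norm_divide)
  also have "\<dots> \<le> (cmod X + cmod Y) / 2" by (intro divide_right_mono norm_triangle_ineq4) simp
  finally show ?thesis .
qed

lemma scalar_jost:
  fixes f f' gq :: "real \<Rightarrow> complex" and w :: "real \<Rightarrow> real" and k B :: real and \<delta> :: complex
  assumes k: "k \<noteq> 0"
    and fd: "\<And>x. x \<ge> 0 \<Longrightarrow> (f has_vector_derivative f' x) (at x within {0..})"
    and fi: "\<And>x. x \<ge> 0 \<Longrightarrow> ((\<lambda>t. gq t - of_real (k^2) * f t) has_integral (f' x - f' 0)) {0..x}"
    and gabs: "\<And>x. x \<ge> 0 \<Longrightarrow> gq absolutely_integrable_on {0..x}"
    and wb: "\<And>t. t \<ge> 0 \<Longrightarrow> cmod (gq t) \<le> w t"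
    and wi: "w integrable_on {0..}"
    and wB: "integral {0..} w \<le> B"
    and lim: "((\<lambda>y. f y - exp (\<i> * of_real (k*y)) * \<delta>) \<longlongrightarrow> 0) at_top"
  shows "(\<forall>x\<ge>0. cmod (f x - exp (\<i> * of_real (k*x)) * \<delta>) \<le> 2*B/\<bar>k\<bar>) \<and> cmod (f' 0 - \<i> * of_real k * \<delta>) \<le> 2*B"
proof -
  define Az where "Az z t = exp (of_real t * z) * (f' t - z * f t)" for z t
  define e where "e y = exp (\<i> * of_real (k*y))" for y
  have bnd: "cmod (Az z b - Az z a) \<le> B" if z: "z^2 = - of_real (k^2)" "Re z = 0" and ab: "0 \<le> a" "a \<le> b" for z a b
  proof -
    have I: "((\<lambda>t. exp (of_real t * z) * gq t) has_integral (Az z b - Az z a)) {a..b}"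
      unfolding Az_def by (rule entry_identity[OF z(1) fd fi gabs ab])
    have wi2: "w integrable_on {a..b}" by (rule integrable_on_subinterval[OF wi]) (use ab in auto)
    have "cmod (Az z b - Az z a) = norm (integral {a..b} (\<lambda>t. exp (of_real t * z) * gq t))"
      using I by (simp add: integral_unique)
    also have "\<dots> \<le> integral {a..b} w"
    proof (rule integral_norm_bound_integral[OF has_integral_integrable[OF I] wi2])
      fix t assume t: "t \<in> {a..b}"
      have "norm (exp (of_real t * z) * gq t) = cmod (gq t)" using z(2) by (simp add: norm_mult)
      then show "norm (exp (of_real t * z) * gq t) \<le> w t" using wb[of t] t ab by auto
    qed
    also have "\<dots> \<le> integral {0..} w"
      by (rule integral_subset_le) (use ab wi2 wi wb in \<open>auto intro: order_trans[OF norm_ge_zero]\<close>)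
    finally show ?thesis using wB by simp
  qed
  define z1 where "z1 = - (\<i> * of_real k)"
  define z2 where "z2 = \<i> * of_real k"
  have z1p: "z1^2 = - of_real (k^2)" "Re z1 = 0" unfolding z1_def by (simp_all add: power_mult_distrib)
  have z2p: "z2^2 = - of_real (k^2)" "Re z2 = 0" unfolding z2_def by (simp_all add: power_mult_distrib)
  have en: "e y \<noteq> 0" "cmod (e y) = 1" for y unfolding e_def by simp_all
  have ez1: "exp (of_real y * z1) = inverse (e y)" for y
  proof -
    have "of_real y * z1 = - (\<i> * of_real (k*y))" unfolding z1_def by simp
    then show ?thesis unfolding e_def by (simp add: exp_minus)
  qed
  have ez2: "exp (of_real y * z2) = e y" for y
  proof -
    have "of_real y * z2 = \<i> * of_real (k*y)" unfolding z2_def by simp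
    then show ?thesis unfolding e_def by (simp only:)
  qed
  have A1: "Az z1 y = inverse (e y) * (f' y + \<i> * of_real k * f y)" for y
    unfolding Az_def ez1 by (simp add: z1_def)
  have A2: "Az z2 y = e y * (f' y - \<i> * of_real k * f y)" for y
    unfolding Az_def ez2 by (simp add: z2_def)
  define \<phi> where "\<phi> y = inverse (e y) * (f y - e y * \<delta>)" for y
  have \<phi>lim: "(\<phi> \<longlongrightarrow> 0) at_top"
  proof (rule tendsto_norm_zero_cancel)
    have "norm (\<phi> y) = norm (f y - e y * \<delta>)" for y
      unfolding \<phi>_def using en[of y] by (simp add: norm_mult norm_inverse)
    then show "((\<lambda>y. norm (\<phi> y)) \<longlongrightarrow> 0) at_top"
      using tendsto_norm_zero[OF lim] unfolding e_def by simp
  qed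
  have kk: "(2 * \<i> * of_real k) \<noteq> (0::complex)" using k by simp
  define s1 where "s1 n = real n * pi / \<bar>k\<bar>" for n
  define s2 where "s2 n = (real n + 1/2) * pi / \<bar>k\<bar>" for n
  have pk: "pi / \<bar>k\<bar> > 0" using k by simp
  have s1lim: "filterlim s1 at_top sequentially"
  proof -
    have "filterlim (\<lambda>n. pi / \<bar>k\<bar> * real n) at_top sequentially"
      by (rule filterlim_tendsto_pos_mult_at_top[OF tendsto_const pk filterlim_real_sequentially])
    then show ?thesis unfolding s1_def by (simp add: field_simps)
  qed
  have s2lim: "filterlim s2 at_top sequentially"
  proof -
    have "filterlim (\<lambda>n. 1/2 + real n) at_top sequentially"
      by (rule filterlim_tendsto_add_at_top[OF tendsto_const filterlim_real_sequentially])
    then have "filterlim (\<lambda>n. real n + 1/2) at_top sequentially" by (simp add: add.commute)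
    then have "filterlim (\<lambda>n. pi / \<bar>k\<bar> * (real n + 1/2)) at_top sequentially"
      by (rule filterlim_tendsto_pos_mult_at_top[OF tendsto_const pk])
    then show ?thesis unfolding s2_def by (simp add: field_simps)
  qed
  have es1: "(inverse (e (s1 n)))^2 = 1" for n
    using e_sq1[OF k, of n] unfolding e_def s1_def by (simp add: power_inverse)
  have es2: "(inverse (e (s2 n)))^2 = -1" for n
    using e_sq2[OF k, of n] unfolding e_def s2_def by (simp add: power_inverse)
  have key: "Az z1 y - (inverse (e y))^2 * Az z2 y - (2 * \<i> * of_real k) * \<delta> = (2 * \<i> * of_real k) * \<phi> y" for y
    unfolding A1 A2 \<phi>_def using en[of y] by (simp add: field_simps power2_eq_square)
  have psi1: "((\<lambda>n. Az z1 (s1 n) - Az z2 (s1 n) - (2 * \<i> * of_real k) * \<delta>) \<longlongrightarrow> 0) sequentially"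
  proof -
    have "((\<lambda>n. (2 * \<i> * of_real k) * \<phi> (s1 n)) \<longlongrightarrow> 0) sequentially"
      by (rule tendsto_mult_right_zero[OF filterlim_compose[OF \<phi>lim s1lim]])
    moreover have "Az z1 (s1 n) - Az z2 (s1 n) - (2 * \<i> * of_real k) * \<delta> = (2 * \<i> * of_real k) * \<phi> (s1 n)" for n
      using key[of "s1 n"] es1[of n] by simp
    ultimately show ?thesis by simp
  qed
  have psi2: "((\<lambda>n. Az z1 (s2 n) + Az z2 (s2 n) - (2 * \<i> * of_real k) * \<delta>) \<longlongrightarrow> 0) sequentially"
  proof -
    have "((\<lambda>n. (2 * \<i> * of_real k) * \<phi> (s2 n)) \<longlongrightarrow> 0) sequentially"
      by (rule tendsto_mult_right_zero[OF filterlim_compose[OF \<phi>lim s2lim]])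
    moreover have "Az z1 (s2 n) + Az z2 (s2 n) - (2 * \<i> * of_real k) * \<delta> = (2 * \<i> * of_real k) * \<phi> (s2 n)" for n
      using key[of "s2 n"] es2[of n] by simp
    ultimately show ?thesis by simp
  qed
  have gen: "cmod (Az z1 x + c * Az z2 x - (2 * \<i> * of_real k) * \<delta>) \<le> 2 * B"
    if x: "x \<ge> 0" and c: "cmod c = 1" and sl: "filterlim s at_top sequentially"
      and ps: "((\<lambda>n. Az z1 (s n) + c * Az z2 (s n) - (2 * \<i> * of_real k) * \<delta>) \<longlongrightarrow> 0) sequentially"
    for x c s
  proof (rule tendsto_le[OF trivial_limit_sequentially])
    let ?P = "\<lambda>n. Az z1 (s n) + c * Az z2 (s n) - (2 * \<i> * of_real k) * \<delta>"
    show "((\<lambda>n. 2 * B + cmod (?P n)) \<longlongrightarrow> 2 * B) sequentially"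
      using tendsto_add[OF tendsto_const tendsto_norm[OF ps]] by simp
    show "((\<lambda>n. cmod (Az z1 x + c * Az z2 x - (2 * \<i> * of_real k) * \<delta>)) \<longlongrightarrow> cmod (Az z1 x + c * Az z2 x - (2 * \<i> * of_real k) * \<delta>)) sequentially"
      by simp
    have ev: "eventually (\<lambda>n. x \<le> s n) sequentially"
      using sl by (simp add: filterlim_at_top)
    show "eventually (\<lambda>n. cmod (Az z1 x + c * Az z2 x - (2 * \<i> * of_real k) * \<delta>) \<le> 2 * B + cmod (?P n)) sequentially"
      using ev
    proof eventually_elim
      case (elim n)
      have b1: "cmod (Az z1 x - Az z1 (s n)) \<le> B"
        using bnd[OF z1p x elim] by (simp add: norm_minus_commute)
      have b2: "cmod (c * (Az z2 x - Az z2 (s n))) \<le> B"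
        using bnd[OF z2p x elim] c by (simp add: norm_mult norm_minus_commute)
      have "Az z1 x + c * Az z2 x - (2 * \<i> * of_real k) * \<delta> =
            (Az z1 x - Az z1 (s n)) + c * (Az z2 x - Az z2 (s n)) + ?P n"
        by (simp add: algebra_simps)
      also have "cmod \<dots> \<le> cmod (Az z1 x - Az z1 (s n)) + cmod (c * (Az z2 x - Az z2 (s n))) + cmod (?P n)"
        by (rule order_trans[OF norm_triangle_ineq add_right_mono[OF norm_triangle_ineq]])
      finally show ?case using b1 b2 by simp
    qed
  qed
  have L1: "cmod (Az z1 x - Az z2 x - (2 * \<i> * of_real k) * \<delta>) \<le> 2 * B" if "x \<ge> 0" for x
    using gen[OF that _ s1lim, of "-1"] psi1 by simp
  have L2: "cmod (Az z1 x + Az z2 x - (2 * \<i> * of_real k) * \<delta>) \<le> 2 * B" if "x \<ge> 0" for x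
    using gen[OF that _ s2lim, of 1] psi2 by simp
  have M1: "cmod (Az z1 x - (2 * \<i> * of_real k) * \<delta>) \<le> 2 * B" if "x \<ge> 0" for x
  proof -
    have "Az z1 x - (2 * \<i> * of_real k) * \<delta> = ((Az z1 x - Az z2 x - (2 * \<i> * of_real k) * \<delta>) + (Az z1 x + Az z2 x - (2 * \<i> * of_real k) * \<delta>)) / 2"
      by (simp add: field_simps)
    also have "cmod \<dots> \<le> (cmod (Az z1 x - Az z2 x - (2 * \<i> * of_real k) * \<delta>) + cmod (Az z1 x + Az z2 x - (2 * \<i> * of_real k) * \<delta>)) / 2"
      by (rule half_tri1)
    finally show ?thesis using L1[OF that] L2[OF that] by simp
  qed
  have M2: "cmod (Az z2 x) \<le> 2 * B" if "x \<ge> 0" for x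
  proof -
    have "Az z2 x = ((Az z1 x + Az z2 x - (2 * \<i> * of_real k) * \<delta>) - (Az z1 x - Az z2 x - (2 * \<i> * of_real k) * \<delta>)) / 2"
      by (simp add: field_simps)
    also have "cmod \<dots> \<le> (cmod (Az z1 x + Az z2 x - (2 * \<i> * of_real k) * \<delta>) + cmod (Az z1 x - Az z2 x - (2 * \<i> * of_real k) * \<delta>)) / 2"
      by (rule half_tri2)
    finally show ?thesis using L1[OF that] L2[OF that] by simp
  qed
  have part1: "cmod (f x - exp (\<i> * of_real (k*x)) * \<delta>) \<le> 2*B/\<bar>k\<bar>" if x: "x \<ge> 0" for x
  proof -
    have "f x - e x * \<delta> = (e x * (Az z1 x - (2 * \<i> * of_real k) * \<delta>) - inverse (e x) * Az z2 x) / (2 * \<i> * of_real k)"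
      unfolding A1 A2 using en[of x] kk by (simp add: field_simps)
    also have "cmod \<dots> \<le> (cmod (Az z1 x - (2 * \<i> * of_real k) * \<delta>) + cmod (Az z2 x)) / (2 * \<bar>k\<bar>)"
    proof -
      have "cmod (e x * (Az z1 x - (2 * \<i> * of_real k) * \<delta>) - inverse (e x) * Az z2 x) \<le>
            cmod (Az z1 x - (2 * \<i> * of_real k) * \<delta>) + cmod (Az z2 x)"
        using norm_triangle_ineq4[of "e x * (Az z1 x - (2 * \<i> * of_real k) * \<delta>)" "inverse (e x) * Az z2 x"] en[of x]
        by (simp add: norm_mult norm_inverse)
      moreover have "cmod (2 * \<i> * of_real k) = 2 * \<bar>k\<bar>" by (simp add: norm_mult)
      ultimately show ?thesis using k by (simp add: norm_divide divide_right_mono)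
    qed
    also have "\<dots> \<le> (2 * B + 2 * B) / (2 * \<bar>k\<bar>)"
      using M1[OF x] M2[OF x] k by (intro divide_right_mono add_mono) auto
    finally show ?thesis unfolding e_def using k by (simp add: field_simps)
  qed
  have part2: "cmod (f' 0 - \<i> * of_real k * \<delta>) \<le> 2*B"
  proof -
    have e0: "e 0 = 1" unfolding e_def by simp
    have "f' 0 - \<i> * of_real k * \<delta> = ((Az z1 0 - (2 * \<i> * of_real k) * \<delta>) + Az z2 0) / 2"
      unfolding A1 A2 e0 by (simp add: field_simps)
    also have "cmod \<dots> \<le> (cmod (Az z1 0 - (2 * \<i> * of_real k) * \<delta>) + cmod (Az z2 0)) / 2"
      by (rule half_tri1)
    finally show ?thesis using M1[of 0] M2[of 0] by simp
  qed
  show ?thesis using part1 part2 by blast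
qed


lemma mat_entry_sub: "((A - mat c) ** B) $ i $ j = (A ** B) $ i $ j - c * B $ i $ j"
  for A B :: "'a::comm_ring_1^'n::finite^'n"
proof -
  have "((A - mat c) ** B) $ i $ j = (\<Sum>l\<in>UNIV. A $ i $ l * B $ l $ j) - (\<Sum>l\<in>UNIV. (if i = l then c else 0) * B $ l $ j)"
    by (simp add: matrix_matrix_mult_def mat_def left_diff_distrib sum_subtractf)
  also have "(\<Sum>l\<in>UNIV. (if i = l then c else 0) * B $ l $ j) = c * B $ i $ j"
  proof -
    have "(\<Sum>l\<in>UNIV. (if i = l then c else 0) * B $ l $ j) = (\<Sum>l\<in>UNIV. if i = l then c * B $ l $ j else 0)"
      by (rule sum.cong) auto
    also have "\<dots> = c * B $ i $ j" by simp
    finally show ?thesis .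
  qed
  finally show ?thesis by (simp add: matrix_matrix_mult_def)
qed

lemma entry_le: "norm (M $ i $ j) \<le> norm M" for M :: "complex^'n::finite^'m::finite"
proof -
  have "norm (M $ i $ j) \<le> norm (M $ i)" by (rule Finite_Cartesian_Product.norm_nth_le)
  also have "norm (M $ i) \<le> norm M" by (rule Finite_Cartesian_Product.norm_nth_le)
  finally show ?thesis .
qed

lemma bl_entry: "bounded_linear (\<lambda>M::complex^'n::finite^'m::finite. M $ i $ j)"
proof -
  have a: "bounded_linear (\<lambda>v::complex^'n. v $ j)" by (rule bounded_linear_vec_nth)
  have b: "bounded_linear (\<lambda>M::complex^'n^'m. M $ i)" by (rule bounded_linear_vec_nth)
  show ?thesis using bounded_linear_compose[OF a b] by simp
qed

lemma jost_bounds: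
  fixes Q :: "real \<Rightarrow> complex^'n::finite^'n" and F F' :: "real \<Rightarrow> complex^'n^'n" and k q :: real
  assumes k: "k \<noteq> 0" and J: "mat_solution Q k F F'"
    and lim: "((\<lambda>x. F x - mat (exp (\<i> * complex_of_real (k * x)))) \<longlongrightarrow> 0) at_top"
    and Qa: "Q absolutely_integrable_on {0..}"
    and q: "integral {0..} (\<lambda>t. norm (Q t)) \<le> q"
    and big: "4 * real CARD('n) * q \<le> \<bar>k\<bar>"
  shows "\<forall>i j. cmod (F 0 $ i $ j - (if i = j then 1 else 0)) \<le> 4 * real CARD('n) * q / \<bar>k\<bar> \<and>
               cmod (F' 0 $ i $ j - (if i = j then \<i> * of_real k else 0)) \<le> 4 * real CARD('n) * q"
proof -
  have fd: "(F has_vector_derivative F' x) (at x within {0..})" if "x \<ge> 0" for x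
    using J that unfolding mat_solution_def by auto
  have fi: "((\<lambda>t. (Q t - mat (complex_of_real (k^2))) ** F t) has_integral (F' x - F' 0)) {0..x}" if "x \<ge> 0" for x
    using J that unfolding mat_solution_def by auto
  have Fc: "continuous_on {0..} F" by (rule continuous_on_vector_derivative) (use fd in auto)
  have fdij: "((\<lambda>x. F x $ i $ j) has_vector_derivative F' x $ i $ j) (at x within {0..})" if "x \<ge> 0" for x i j
    using bounded_linear.has_vector_derivative[OF bl_entry fd[OF that]] .
  have Fcij: "continuous_on {0..} (\<lambda>x. F x $ i $ j)" for i j
    by (rule continuous_on_vector_derivative) (use fdij in auto)
  have nQi: "(\<lambda>t. norm (Q t)) integrable_on {0..}" using Qa absolutely_integrable_on_def by blast
  have q0: "0 \<le> q" using q integral_nonneg[OF nQi] by force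
  obtain M where M: "\<And>x i j. x \<ge> 0 \<Longrightarrow> cmod (F x $ i $ j) \<le> M"
  proof -
    obtain X where X: "\<And>x. x \<ge> X \<Longrightarrow> norm (F x - mat (exp (\<i> * complex_of_real (k * x)))) < 1"
      using lim unfolding tendsto_iff eventually_at_top_linorder by (metis dist_0_norm dist_commute zero_less_one)
    have "compact (F ` {0..max X 0})"
      by (rule compact_continuous_image[OF continuous_on_subset[OF Fc]]) auto
    then obtain M0 where M0: "\<And>x. x \<in> {0..max X 0} \<Longrightarrow> norm (F x) \<le> M0"
      using compact_imp_bounded bounded_iff by (metis image_eqI)
    show ?thesis
    proof (rule that[of "max M0 2"])
      fix x i j assume x: "x \<ge> (0::real)"
      show "cmod (F x $ i $ j) \<le> max M0 2"
      proof (cases "x \<le> max X 0")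
        case True
        then show ?thesis using M0[of x] x entry_le[of "F x" i j] by auto
      next
        case False
        then have "norm (F x - mat (exp (\<i> * complex_of_real (k * x)))) < 1" using X by auto
        then have a: "cmod ((F x - mat (exp (\<i> * complex_of_real (k * x)))) $ i $ j) < 1"
          using entry_le le_less_trans by blast
        have "cmod (F x $ i $ j) \<le> cmod ((F x - mat (exp (\<i> * complex_of_real (k * x)))) $ i $ j) + cmod ((mat (exp (\<i> * complex_of_real (k * x))) :: complex^'n^'n) $ i $ j)"
          by (rule order_trans[OF _ norm_triangle_ineq]) simp
        also have "cmod ((mat (exp (\<i> * complex_of_real (k * x))) :: complex^'n^'n) $ i $ j) \<le> 1"
          by (simp add: mat_def)
        finally show ?thesis using a by auto
      qed
    qed
  qed
  define S where "S = {cmod (F x $ i $ j) | x i j. 0 \<le> x}"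
  define m where "m = Sup S"
  have Sne: "S \<noteq> {}" unfolding S_def by blast
  have Sbdd: "bdd_above S" unfolding S_def bdd_above_def using M by blast
  have mb: "cmod (F x $ i $ j) \<le> m" if "x \<ge> 0" for x i j
    unfolding m_def by (rule cSup_upper[OF _ Sbdd]) (use that S_def in blast)
  have m0: "0 \<le> m" using mb[of 0] norm_ge_zero order_trans by blast
  define n where "n = real CARD('n)"
  define w where "w t = n * m * norm (Q t)" for t
  define gq where "gq i j t = (Q t ** F t) $ i $ j" for i j t
  have wi: "w integrable_on {0..}" unfolding w_def using nQi by (rule integrable_on_mult_right)
  have wB: "integral {0..} w \<le> n * m * q"
    unfolding w_def using q m0 by (simp add: n_def mult_left_mono)
  have wb: "cmod (gq i j t) \<le> w t" if "t \<ge> 0" for i j t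
  proof -
    have "cmod (gq i j t) = cmod (\<Sum>l\<in>UNIV. Q t $ i $ l * F t $ l $ j)"
      unfolding gq_def by (simp add: matrix_matrix_mult_def)
    also have "\<dots> \<le> (\<Sum>l\<in>UNIV. cmod (Q t $ i $ l * F t $ l $ j))" by (rule norm_sum)
    also have "\<dots> \<le> (\<Sum>l\<in>(UNIV::'n set). norm (Q t) * m)"
    proof (rule sum_mono)
      fix l
      show "cmod (Q t $ i $ l * F t $ l $ j) \<le> norm (Q t) * m"
        unfolding norm_mult using entry_le[of "Q t" i l] mb[OF that, of l j]
        by (intro mult_mono) auto
    qed
    also have "\<dots> = w t" unfolding w_def n_def by simp
    finally show ?thesis .
  qed
  have gabs: "gq i j absolutely_integrable_on {0..x}" if "x \<ge> 0" for i j x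
  proof -
    have "(\<lambda>t. \<Sum>l\<in>UNIV. F t $ l $ j * Q t $ i $ l) absolutely_integrable_on {0..x}"
    proof (rule absolutely_integrable_sum)
      fix l
      have Qil: "(\<lambda>t. Q t $ i $ l) absolutely_integrable_on {0..x}"
        using absolutely_integrable_linear[OF absolutely_integrable_on_subinterval[OF Qa, of 0 x] bl_entry[of i l]]
        by (simp add: o_def)
      show "(\<lambda>t. F t $ l $ j * Q t $ i $ l) absolutely_integrable_on {0..x}"
      proof (rule absolutely_integrable_bounded_measurable_product[OF bilinear_times _ _ _ Qil])
        have c: "continuous_on {0..x} (\<lambda>t. F t $ l $ j)" by (rule continuous_on_subset[OF Fcij]) auto
        show "(\<lambda>t. F t $ l $ j) \<in> borel_measurable (lebesgue_on {0..x})"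
          by (rule continuous_imp_measurable_on_sets_lebesgue[OF c]) simp
        show "bounded ((\<lambda>t. F t $ l $ j) ` {0..x})"
          by (rule compact_imp_bounded[OF compact_continuous_image[OF c]]) simp
      qed simp
    qed simp
    then show ?thesis unfolding gq_def by (simp add: matrix_matrix_mult_def mult.commute)
  qed
  have each: "(\<forall>x\<ge>0. cmod (F x $ i $ j - exp (\<i> * of_real (k*x)) * (if i = j then 1 else 0)) \<le> 2*(n*m*q)/\<bar>k\<bar>) \<and>
              cmod (F' 0 $ i $ j - \<i> * of_real k * (if i = j then 1 else 0)) \<le> 2*(n*m*q)" for i j
  proof (rule scalar_jost[OF k fdij _ gabs wb wi wB])
    fix x :: real assume x: "x \<ge> 0"
    have "((\<lambda>t. ((Q t - mat (complex_of_real (k^2))) ** F t) $ i $ j) has_integral (F' x - F' 0) $ i $ j) {0..x}"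
      using has_integral_linear[OF fi[OF x] bl_entry[of i j]] by (simp add: o_def)
    then show "((\<lambda>t. gq i j t - of_real (k^2) * F t $ i $ j) has_integral (F' x $ i $ j - F' 0 $ i $ j)) {0..x}"
      unfolding gq_def mat_entry_sub by simp
  next
    have "((\<lambda>y. (F y - mat (exp (\<i> * complex_of_real (k * y)))) $ i $ j) \<longlongrightarrow> (0::complex^'n^'n) $ i $ j) at_top"
      by (intro tendsto_vec_nth lim)
    then show "((\<lambda>y. F y $ i $ j - exp (\<i> * of_real (k*y)) * (if i = j then 1 else 0)) \<longlongrightarrow> 0) at_top"
      by (cases "i = j") (simp_all add: mat_def)
  qed auto
  have m2: "m \<le> 2"
  proof -
    have "2*(n*m*q)/\<bar>k\<bar> \<le> m/2"
    proof -
      have "4 * n * q * m \<le> \<bar>k\<bar> * m" using big m0 unfolding n_def by (intro mult_right_mono) auto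
      then show ?thesis using k by (simp add: field_simps)
    qed
    moreover have "Sup S \<le> 1 + 2*(n*m*q)/\<bar>k\<bar>"
    proof (rule cSup_least[OF Sne])
      fix s assume "s \<in> S"
      then obtain x i j where s: "s = cmod (F x $ i $ j)" "0 \<le> x" unfolding S_def by blast
      have "cmod (F x $ i $ j) \<le> cmod (F x $ i $ j - exp (\<i> * of_real (k*x)) * (if i = j then 1 else 0)) + cmod (exp (\<i> * of_real (k*x)) * (if i = j then 1 else 0))"
        by (rule order_trans[OF _ norm_triangle_ineq]) simp
      also have "cmod (exp (\<i> * of_real (k*x)) * (if i = j then 1 else 0)) \<le> 1" by (simp add: norm_mult)
      finally show "s \<le> 1 + 2*(n*m*q)/\<bar>k\<bar>" using each[of i j] s by auto
    qed
    ultimately show ?thesis unfolding m_def[symmetric] by simp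
  qed
  show ?thesis
  proof (intro allI conjI)
    fix i j
    have a: "2*(n*m*q) \<le> 4 * n * q" using m2 q0 unfolding n_def by (simp add: mult_right_mono mult_left_mono)
    have "cmod (F 0 $ i $ j - (if i = j then 1 else 0)) \<le> 2*(n*m*q)/\<bar>k\<bar>"
      using spec[OF conjunct1[OF each[of i j]], of 0] by simp
    also have "\<dots> \<le> 4 * n * q / \<bar>k\<bar>" using a by (simp add: divide_right_mono)
    finally show "cmod (F 0 $ i $ j - (if i = j then 1 else 0)) \<le> 4 * real CARD('n) * q / \<bar>k\<bar>" unfolding n_def .
    have "cmod (F' 0 $ i $ j - (if i = j then \<i> * of_real k else 0)) \<le> 2*(n*m*q)"
    proof -
      have "(if i = j then \<i> * of_real k else 0) = \<i> * of_real k * (if i = j then 1 else 0)" by simp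
      then show ?thesis using conjunct2[OF each[of i j]] by simp
    qed
    also have "\<dots> \<le> 4 * n * q" using a .
    finally show "cmod (F' 0 $ i $ j - (if i = j then \<i> * of_real k else 0)) \<le> 4 * real CARD('n) * q" unfolding n_def .
  qed
qed


type_synonym 'n cm = "complex^'n^'n"

lemma mm_add_r: "(A + B) ** C = A ** C + B ** (C::'a::semiring_1^'p^'n)"
  by (vector matrix_matrix_mult_def sum.distrib[symmetric] field_simps)
lemma mm_diff_r: "(A - B) ** C = A ** C - B ** (C::'a::ring_1^'p^'n)"
  by (vector matrix_matrix_mult_def sum_subtractf[symmetric] field_simps)
lemma mm_diff_l: "A ** (B - C) = A ** B - A ** (C::'a::ring_1^'p^'n)"
  by (vector matrix_matrix_mult_def sum_subtractf[symmetric] field_simps)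
lemma mm_neg_l: "(- A) ** B = - (A ** (B::'a::ring_1^'p^'n))"
  by (vector matrix_matrix_mult_def sum_negf[symmetric])
lemma mm_neg_r: "A ** (- B) = - (A ** (B::'a::ring_1^'p^'n))"
  by (vector matrix_matrix_mult_def sum_negf[symmetric])
lemma mm_scaleR_l: "(r *\<^sub>R A) ** B = r *\<^sub>R (A ** (B::'a::real_algebra_1^'p^'n))"
  by (simp add: scalar_matrix_assoc)
lemma mm_scaleR_r: "A ** (r *\<^sub>R B) = r *\<^sub>R (A ** (B::'a::real_algebra_1^'p^'n))"
  by (simp add: matrix_matrix_mult_def sum_distrib_left mult_ac vec_eq_iff scaleR_sum_right)
lemma mat_mm: "mat c ** B = (\<chi> i j. c * B $ i $ j)" for B :: "'a::comm_ring_1^'n::finite^'n"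
  unfolding matrix_matrix_mult_def mat_def
  by (auto simp: vec_eq_iff if_distrib if_distribR sum.delta cong: if_cong)
lemma mm_mat: "B ** mat c = (\<chi> i j. c * B $ i $ j)" for B :: "'a::comm_ring_1^'n::finite^'n"
  unfolding matrix_matrix_mult_def mat_def
  by (auto simp: vec_eq_iff if_distrib if_distribR sum.delta' mult.commute cong: if_cong)
lemma mat_comm: "mat c ** B = B ** mat c" for B :: "'a::comm_ring_1^'n::finite^'n"
  by (simp add: mat_mm mm_mat)
lemma mat_mult: "mat a ** mat b = (mat (a * b) :: 'a::comm_ring_1^'n::finite^'n)"
  unfolding mat_mm by (simp add: vec_eq_iff mat_def)
lemma mat_add: "mat a + mat b = (mat (a + b) :: 'a::comm_ring_1^'n::finite^'n)"
  by (simp add: vec_eq_iff mat_def)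
lemma mat_diff: "mat a - mat b = (mat (a - b) :: 'a::comm_ring_1^'n::finite^'n)"
  by (simp add: vec_eq_iff mat_def)
lemma mat_neg: "- mat a = (mat (- a) :: 'a::comm_ring_1^'n::finite^'n)"
  by (simp add: vec_eq_iff mat_def)
lemma mat_mm_assoc: "mat c ** (A ** B) = (mat c ** A) ** (B::'a::comm_ring_1^'n::finite^'n)"
  by (simp add: matrix_mul_assoc)

lemma cadj_mm: "cadj (A ** B) = cadj B ** cadj (A :: 'n::finite cm)"
  by (simp add: cadj_def matrix_matrix_mult_def vec_eq_iff mult.commute)
lemma cadj_add: "cadj (A + B) = cadj A + cadj (B :: 'n::finite cm)"
  by (simp add: cadj_def vec_eq_iff)
lemma cadj_diff: "cadj (A - B) = cadj A - cadj (B :: 'n::finite cm)"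
  by (simp add: cadj_def vec_eq_iff)
lemma cadj_scaleR: "cadj (r *\<^sub>R A) = r *\<^sub>R cadj (A :: 'n::finite cm)"
  by (simp add: cadj_def vec_eq_iff)
lemma cadj_mat: "cadj (mat c :: 'n::finite cm) = mat (cnj c)"
  by (simp add: cadj_def vec_eq_iff mat_def)
lemma cadj_cadj: "cadj (cadj A) = (A :: 'n::finite cm)"
  by (simp add: cadj_def vec_eq_iff)

lemma tendsto_cadj:
  fixes X :: "'b \<Rightarrow> 'n::finite cm"
  assumes "(X \<longlongrightarrow> L) F" shows "((\<lambda>x. cadj (X x)) \<longlongrightarrow> cadj L) F"
  unfolding cadj_def by (intro tendsto_vec_lambda tendsto_cnj tendsto_vec_nth assms)

lemma tendsto_mm:
  fixes X Y :: "'b \<Rightarrow> 'n::finite cm"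
  assumes "(X \<longlongrightarrow> L) F" "(Y \<longlongrightarrow> M) F" shows "((\<lambda>x. X x ** Y x) \<longlongrightarrow> L ** M) F"
  unfolding matrix_matrix_mult_def by (intro tendsto_vec_lambda tendsto_sum tendsto_mult tendsto_vec_nth assms)

lemma tendsto_det:
  fixes X :: "'b \<Rightarrow> 'n::finite cm"
  assumes "(X \<longlongrightarrow> L) F" shows "((\<lambda>x. det (X x)) \<longlongrightarrow> det L) F"
  unfolding det_def by (intro tendsto_sum tendsto_mult tendsto_const tendsto_prod tendsto_vec_nth assms)

lemma tendsto_if_const: "(f \<longlongrightarrow> a) F \<Longrightarrow> ((\<lambda>x. if P then c else f x) \<longlongrightarrow> (if P then c else a)) F"
  by (cases P) auto

lemma minv_props:
  fixes A :: "'n::finite cm"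
  assumes "invertible A"
  shows "A ** matrix_inv A = mat 1" "matrix_inv A ** A = mat 1"
  using someI_ex[OF assms[unfolded invertible_def]] unfolding matrix_inv_def by auto

lemma minv_unique:
  fixes A B :: "'n::finite cm"
  assumes "A ** B = mat 1"
  shows "invertible A" "matrix_inv A = B"
proof -
  have BA: "B ** A = mat 1" using assms matrix_left_right_inverse by blast
  then show "invertible A" unfolding invertible_def using assms by blast
  then have "matrix_inv A ** A = mat 1" by (rule minv_props)
  then have "matrix_inv A ** (A ** B) = B" by (simp add: matrix_mul_assoc)
  then show "matrix_inv A = B" using assms by simp
qed

lemma minv_cramer:
  fixes Y :: "'n::finite cm"
  assumes d: "det Y \<noteq> 0"
  shows "matrix_inv Y $ k $ j = det (\<chi> i l. if l = k then (axis j 1 :: complex^'n) $ i else Y $ i $ l) / det Y"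
proof -
  have inv: "invertible Y" using d invertible_det_nz by blast
  define x where "x = matrix_inv Y *v axis j 1"
  have "Y *v x = axis j 1" unfolding x_def matrix_vector_mul_assoc minv_props(1)[OF inv] by simp
  then have "x = (\<chi> k. det(\<chi> i l. if l = k then (axis j 1 :: complex^'n) $ i else Y $ i $ l) / det Y)"
    using cramer[OF d] by blast
  moreover have "x $ k = matrix_inv Y $ k $ j"
    unfolding x_def by (simp add: matrix_vector_mult_def axis_def if_distrib if_distribR sum.delta' cong: if_cong)
  ultimately show ?thesis by simp
qed

lemma tendsto_minv:
  fixes X :: "'b \<Rightarrow> 'n::finite cm"
  assumes X: "(X \<longlongrightarrow> L) F" and d: "det L \<noteq> 0"
  shows "eventually (\<lambda>x. invertible (X x)) F" "((\<lambda>x. matrix_inv (X x)) \<longlongrightarrow> matrix_inv L) F"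
proof -
  have dX: "((\<lambda>x. det (X x)) \<longlongrightarrow> det L) F" by (rule tendsto_det[OF X])
  have ev: "eventually (\<lambda>x. det (X x) \<noteq> 0) F" by (rule tendsto_imp_eventually_ne[OF dX d])
  then show "eventually (\<lambda>x. invertible (X x)) F" by eventually_elim (simp add: invertible_det_nz)
  show "((\<lambda>x. matrix_inv (X x)) \<longlongrightarrow> matrix_inv L) F"
  proof (rule vec_tendstoI)
    fix k
    show "((\<lambda>x. matrix_inv (X x) $ k) \<longlongrightarrow> matrix_inv L $ k) F"
    proof (rule vec_tendstoI)
      fix j
      have c: "((\<lambda>x. det (\<chi> i l. if l = k then (axis j 1 :: complex^'n) $ i else X x $ i $ l) / det (X x)) \<longlongrightarrow>
                det (\<chi> i l. if l = k then (axis j 1 :: complex^'n) $ i else L $ i $ l) / det L) F"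
        by (intro tendsto_divide d tendsto_det tendsto_vec_lambda tendsto_if_const tendsto_vec_nth X)
      show "((\<lambda>x. matrix_inv (X x) $ k $ j) \<longlongrightarrow> matrix_inv L $ k $ j) F"
        unfolding minv_cramer[OF d]
        by (rule Lim_transform_eventually[OF c]) (use ev in \<open>auto elim: eventually_mono simp: minv_cramer\<close>)
    qed
  qed
qed


lemma cinner_add_left: "cinner (x + y) w = cinner x w + cinner y w"
  by (simp add: cinner_def sum.distrib distrib_right)
lemma cinner_diff_left: "cinner (x - y) w = cinner x w - cinner y w"
  by (simp add: cinner_def sum_subtractf left_diff_distrib)
lemma cinner_minus_left: "cinner (- x) w = - cinner x w"
  by (simp add: cinner_def sum_negf)
lemma cinner_scale_left: "cinner (c *s x) w = c * cinner x w"
  by (simp add: cinner_def sum_distrib_left mult.assoc)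
lemma cinner_zero_left [simp]: "cinner 0 w = 0"
  by (simp add: cinner_def)
lemma cinner_sum_left: "cinner (\<Sum>j\<in>S. f j) w = (\<Sum>j\<in>S. cinner (f j) w)" if "finite S"
  using that by (induction S rule: finite_induct) (simp_all add: cinner_add_left)
lemma cinner_i_right: "cinner x (\<i> *s y) = - \<i> * cinner x y"
  by (simp add: cinner_def sum_distrib_left algebra_simps)
lemma Re_cinner: "Re (cinner x y) = inner x y"
  by (simp add: cinner_def inner_vec_def inner_complex_def Re_sum)
lemma cinner_self0: "cinner x x = 0 \<Longrightarrow> x = 0"
proof -
  assume a: "cinner x x = 0"
  have "inner x x = 0" using arg_cong[OF a, of Re] by (simp add: Re_cinner)
  then show "x = 0" by simp
qed
lemma mv_scaleR: "M *v (c *\<^sub>R v) = c *\<^sub>R (M *v v)" for M :: "complex^'n::finite^'m"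
  by (simp add: vec_eq_iff matrix_vector_mult_def scaleR_sum_right)
lemma mat_mv: "mat c *v x = c *s x" for x :: "'a::comm_ring_1^'n::finite"
  by (simp add: vec_eq_iff matrix_vector_mult_def mat_def if_distrib if_distribR cong: if_cong)
lemma cinner_adj: "cinner (M *v v) w = cinner v (cadj M *v w)"
proof -
  have "cinner (M *v v) w = (\<Sum>i\<in>UNIV. \<Sum>j\<in>UNIV. M $ i $ j * v $ j * cnj (w $ i))"
    by (simp add: cinner_def matrix_vector_mult_def sum_distrib_right)
  also have "\<dots> = (\<Sum>j\<in>UNIV. \<Sum>i\<in>UNIV. M $ i $ j * v $ j * cnj (w $ i))" by (rule sum.swap)
  also have "\<dots> = cinner v (cadj M *v w)"
    by (simp add: cinner_def matrix_vector_mult_def cadj_def sum_distrib_left mult_ac)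
  finally show ?thesis .
qed
lemma mv_scale: "M *v (c *s v) = c *s (M *v v)" for M :: "'a::comm_ring_1^'n::finite^'m"
  by (simp add: vec_eq_iff matrix_vector_mult_def sum_distrib_left mult_ac)
lemma mv_sum: "M *v (\<Sum>j\<in>UNIV. y j) = (\<Sum>j\<in>UNIV. M *v y j)" for M :: "'a::comm_ring_1^'n::finite^'m"
proof -
  have "(M *v (\<Sum>j\<in>UNIV. y j)) $ i = (\<Sum>j\<in>UNIV. M *v y j) $ i" for i
    unfolding matrix_vector_mult_def by (simp add: sum_distrib_left, rule sum.swap)
  then show ?thesis by (simp add: vec_eq_iff)
qed
lemma scale_sum: "(\<Sum>j\<in>UNIV. c j *s (0::'a::comm_ring_1^'n)) = 0" by simp

context
  fixes U :: "'n::finite cm"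
  assumes unit: "unitary U"
begin

abbreviation "K \<equiv> kerUI U"

lemma K_mem: "v \<in> K \<longleftrightarrow> (U + mat 1) *v v = 0" by (simp add: kerUI_def)

lemma K_scale: "v \<in> K \<Longrightarrow> c *s v \<in> K" by (simp add: K_mem mv_scale)
lemma K_sum: "(\<And>j. y j \<in> K) \<Longrightarrow> (\<Sum>j\<in>UNIV. y j) \<in> K" by (simp add: K_mem mv_sum)
lemma K_diff: "v \<in> K \<Longrightarrow> w \<in> K \<Longrightarrow> v - w \<in> K" by (simp add: K_mem matrix_vector_mult_diff_distrib)
lemma K_add: "v \<in> K \<Longrightarrow> w \<in> K \<Longrightarrow> v + w \<in> K" by (simp add: K_mem matrix_vector_right_distrib)
lemma K_zero: "0 \<in> K" by (simp add: K_mem)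
lemma K_subspace: "subspace K"
  unfolding subspace_def by (simp add: K_mem matrix_vector_right_distrib mv_scaleR)

lemma K_Uw: "w \<in> K \<Longrightarrow> U *v w = - w"
  by (simp add: K_mem matrix_vector_mult_add_rdistrib eq_neg_iff_add_eq_0)

lemma K_adjw: "w \<in> K \<Longrightarrow> cadj U *v w = - w"
proof -
  assume w: "w \<in> K"
  have "cadj U *v (U *v w) = w" using unit by (simp add: unitary_def matrix_vector_mul_assoc)
  then have "cadj U *v (- w) = w" using K_Uw[OF w] by simp
  then show ?thesis by (metis matrix_vector_mult_diff_distrib diff_0 matrix_vector_mult_0_right minus_equation_iff)
qed

lemma K_orth: "w \<in> K \<Longrightarrow> cinner ((U + mat 1) *v v) w = 0"
proof -
  assume w: "w \<in> K"
  have "cadj (U + mat 1) *v w = 0"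
    by (simp add: cadj_add cadj_mat matrix_vector_mult_add_rdistrib K_adjw[OF w])
  then show ?thesis unfolding cinner_adj by (simp add: cinner_def)
qed

definition pchar :: "'n cm \<Rightarrow> bool" where
  "pchar P \<longleftrightarrow> (\<forall>v. P *v v \<in> K \<and> (\<forall>w\<in>K. cinner (v - P *v v) w = 0))"

lemma uniq_pt:
  assumes "u1 \<in> K" "u2 \<in> K" "\<forall>w\<in>K. cinner (x - u1) w = 0" "\<forall>w\<in>K. cinner (x - u2) w = 0"
  shows "u1 = u2"
proof -
  have d: "u1 - u2 \<in> K" using assms K_diff by blast
  have "cinner (u1 - u2) (u1 - u2) = cinner (x - u2) (u1 - u2) - cinner (x - u1) (u1 - u2)"
    by (simp add: cinner_diff_left)
  also have "\<dots> = 0" using assms d by simp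
  finally show ?thesis using cinner_self0[of "u1 - u2"] by simp
qed

lemma closest_orth:
  fixes v :: "complex^'n"
  shows "closest_point K v \<in> K" "\<forall>w\<in>K. cinner (v - closest_point K v) w = 0"
proof -
  have cv: "convex K" by (rule subspace_imp_convex[OF K_subspace])
  have cl: "closed K" by (rule closed_subspace[OF K_subspace])
  have ne: "K \<noteq> {}" using K_zero by blast
  show p: "closest_point K v \<in> K" by (rule closest_point_in_set[OF cl ne])
  define p where "p = closest_point K v"
  have re0: "inner (v - p) w = 0" if w: "w \<in> K" for w
  proof -
    have "inner (v - p) ((p + w) - p) \<le> 0"
      unfolding p_def by (rule closest_point_dot[OF cv cl]) (use p w K_add in \<open>simp add: p_def\<close>)
    moreover have "inner (v - p) ((p - w) - p) \<le> 0"
      unfolding p_def by (rule closest_point_dot[OF cv cl]) (use p w K_diff in \<open>simp add: p_def\<close>)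
    ultimately show ?thesis by (simp add: inner_minus_right)
  qed
  show "\<forall>w\<in>K. cinner (v - closest_point K v) w = 0"
  proof
    fix w assume w: "w \<in> K"
    have a: "Re (cinner (v - p) w) = 0" using re0[OF w] by (simp add: Re_cinner)
    have "Re (cinner (v - p) (\<i> *s w)) = 0" using re0[OF K_scale[OF w]] by (simp add: Re_cinner)
    then have b: "Im (cinner (v - p) w) = 0" by (simp add: cinner_i_right)
    show "cinner (v - closest_point K v) w = 0" using a b unfolding p_def by (simp add: complex_eq_iff)
  qed
qed

lemma pchar_exists: "\<exists>P. pchar P"
proof -
  define p where "p j = closest_point K (axis j 1 :: complex^'n)" for j
  define P where "P = (\<chi> i j. p j $ i)"
  have Pv: "P *v v = (\<Sum>j\<in>UNIV. (v $ j) *s p j)" for v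
    by (simp add: vec_eq_iff P_def matrix_vector_mult_def mult.commute)
  have "pchar P" unfolding pchar_def
  proof (intro allI conjI ballI)
    fix v :: "complex^'n"
    show "P *v v \<in> K" unfolding Pv by (intro K_sum K_scale) (simp add: p_def closest_orth)
    fix w assume w: "w \<in> K"
    have "v - P *v v = (\<Sum>j\<in>UNIV. (v $ j) *s (axis j 1 - p j))"
      unfolding Pv by (subst (1) basis_expansion[symmetric, of v]) (simp add: sum_subtractf vector_ssub_ldistrib)
    then have "cinner (v - P *v v) w = (\<Sum>j\<in>UNIV. v $ j * cinner (axis j 1 - p j) w)"
      by (simp add: cinner_sum_left cinner_scale_left cinner_diff_left right_diff_distrib)
    also have "\<dots> = 0" using closest_orth(2) w by (simp add: p_def)
    finally show "cinner (v - P *v v) w = 0" .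
  qed
  then show ?thesis ..
qed

lemma pchar_unique: "P1 = P2" if P1: "pchar P1" and P2: "pchar P2"
  unfolding matrix_eq
proof
  fix x
  have a: "P1 *v x \<in> K" "\<forall>w\<in>K. cinner (x - P1 *v x) w = 0" using P1 unfolding pchar_def by blast+
  have b: "P2 *v x \<in> K" "\<forall>w\<in>K. cinner (x - P2 *v x) w = 0" using P2 unfolding pchar_def by blast+
  show "P1 *v x = P2 *v x" by (rule uniq_pt[OF a(1) b(1) a(2) b(2)])
qed

lemma P_pchar: "pchar (orth_proj_kerUI U)"
proof -
  obtain P where P: "pchar P" using pchar_exists by blast
  have eq: "orth_proj_kerUI U = (THE P. pchar P)"
    unfolding orth_proj_kerUI_def pchar_def by (rule refl)
  have "(THE P. pchar P) = P"
    by (rule the_equality[of pchar P, OF P]) (rule pchar_unique[OF _ P])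
  then have "orth_proj_kerUI U = P" using eq by simp
  then show ?thesis using P by simp
qed

lemma P_apply: "P *v v = u" if "pchar P" "u \<in> K" "\<forall>w\<in>K. cinner (v - u) w = 0"
proof -
  have a: "P *v v \<in> K" "\<forall>w\<in>K. cinner (v - P *v v) w = 0" using that(1) unfolding pchar_def by blast+
  show ?thesis by (rule uniq_pt[OF a(1) that(2) a(2) that(3)])
qed

lemma P_props:
  defines "P \<equiv> orth_proj_kerUI U"
  shows "(U + mat 1) ** P = 0" "P ** P = P" "P ** (U + mat 1) = 0" "invertible (P + bcA U)"
proof -
  have pc: "pchar P" unfolding P_def by (rule P_pchar)
  show "(U + mat 1) ** P = 0"
    unfolding matrix_eq using pc by (simp add: matrix_vector_mul_assoc[symmetric] pchar_def K_mem)
  show "P ** P = P"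
    unfolding matrix_eq
  proof
    fix v
    have "P *v (P *v v) = P *v v" by (rule P_apply[OF pc]) (use pc in \<open>auto simp: pchar_def\<close>)
    then show "(P ** P) *v v = P *v v" by (simp add: matrix_vector_mul_assoc)
  qed
  show "P ** (U + mat 1) = 0"
    unfolding matrix_eq
  proof
    fix v
    have "P *v ((U + mat 1) *v v) = 0" by (rule P_apply[OF pc]) (auto simp: K_zero K_orth)
    then show "(P ** (U + mat 1)) *v v = 0 *v v" by (simp add: matrix_vector_mul_assoc)
  qed
  have Av: "bcA U *v v = (1/2) *s ((U + mat 1) *v v)" for v
    unfolding bcA_def matrix_vector_mul_assoc[symmetric] mat_mv by simp
  have inj0: "v = 0" if v: "(P + bcA U) *v v = 0" for v
  proof -
    have "P *v v + bcA U *v v = 0" using v by (simp add: matrix_vector_mult_add_rdistrib)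
    then have e: "P *v v = - (bcA U *v v)" by (simp add: eq_neg_iff_add_eq_0)
    have PvK: "P *v v \<in> K" using pc by (simp add: pchar_def)
    have "cinner (P *v v) (P *v v) = cinner (- ((1/2) *s ((U + mat 1) *v v))) (P *v v)"
      using e Av by simp
    also have "\<dots> = - ((1/2) * cinner ((U + mat 1) *v v) (P *v v))"
      by (simp add: cinner_minus_left cinner_scale_left)
    also have "\<dots> = 0" using K_orth[OF PvK] by simp
    finally have P0: "P *v v = 0" by (rule cinner_self0)
    then have "(1/2) *s ((U + mat 1) *v v) = 0" using e Av by simp
    then have "(U + mat 1) *v v = 0" by (simp add: vec_eq_iff)
    then have vK: "v \<in> K" by (simp add: K_mem)
    have "P *v v = v" by (rule P_apply[OF pc vK]) simp
    then show ?thesis using P0 by simp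
  qed
  have "inj ((*v) (P + bcA U))"
  proof (rule injI)
    fix x y assume "(P + bcA U) *v x = (P + bcA U) *v y"
    then have "(P + bcA U) *v (x - y) = 0" by (simp add: matrix_vector_mult_diff_distrib)
    then show "x = y" using inj0[of "x - y"] by simp
  qed
  then have "det (matrix ((*v) (P + bcA U))) \<noteq> 0"
    by (subst det_nz_iff_inj_gen[OF matrix_vector_mul_linear_gen])
  then have "det (P + bcA U) \<noteq> 0" by simp
  then show "invertible (P + bcA U)" by (rule invertible_det_nz[THEN iffD2])
qed

end


lemma lim_entries:
  fixes G :: "real \<Rightarrow> complex^'n::finite^'n"
  assumes b: "\<And>k i j. k \<ge> Kz \<Longrightarrow> cmod (G k $ i $ j - L $ i $ j) \<le> C / k"
  shows "(G \<longlongrightarrow> L) at_top"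
proof (rule vec_tendstoI)
  fix i
  show "((\<lambda>k. G k $ i) \<longlongrightarrow> L $ i) at_top"
  proof (rule vec_tendstoI)
    fix j
    have c0: "((\<lambda>k::real. C / k) \<longlongrightarrow> 0) at_top"
      by (rule tendsto_divide_0[OF tendsto_const filterlim_at_top_imp_at_infinity[OF filterlim_ident]])
    have "((\<lambda>k. G k $ i $ j - L $ i $ j) \<longlongrightarrow> 0) at_top"
      by (rule Lim_null_comparison[OF _ c0]) (use b in \<open>auto simp: eventually_at_top_linorder\<close>)
    then show "((\<lambda>k. G k $ i $ j) \<longlongrightarrow> L $ i $ j) at_top" by (rule LIM_zero_cancel)
  qed
qed

lemma NJ_alg:
  fixes a B g A P :: "'n::finite cm"
  assumes "A ** P = 0"
  shows "(a ** B - g ** A) ** (P + c *\<^sub>R (mat 1 - P)) = a ** (B ** P) + c *\<^sub>R (a ** (B ** (mat 1 - P))) - (c *\<^sub>R g) ** A"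
proof -
  have AI: "A ** (mat 1 - P) = A" using assms by (simp add: mm_diff_l)
  have "(a ** B - g ** A) ** (P + c *\<^sub>R (mat 1 - P)) = (a ** B - g ** A) ** P + c *\<^sub>R ((a ** B - g ** A) ** (mat 1 - P))"
    by (simp add: matrix_add_ldistrib mm_scaleR_r)
  also have "(a ** B - g ** A) ** P = a ** (B ** P)"
    by (simp add: mm_diff_r matrix_mul_assoc[symmetric] assms)
  also have "(a ** B - g ** A) ** (mat 1 - P) = a ** (B ** (mat 1 - P)) - g ** A"
    by (simp add: mm_diff_r matrix_mul_assoc[symmetric] AI)
  finally show ?thesis by (simp add: scaleR_right_diff_distrib mm_scaleR_l)
qed

lemma exp4:
  fixes P X :: "'n::finite cm"
  shows "(P + c *\<^sub>R X) ** (P + d *\<^sub>R X) = P ** P + d *\<^sub>R (P ** X) + c *\<^sub>R (X ** P) + (c * d) *\<^sub>R (X ** X)"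
  by (simp add: matrix_add_ldistrib mm_add_r mm_scaleR_l mm_scaleR_r algebra_simps)

lemma J_inv:
  fixes P :: "'n::finite cm"
  assumes PP: "P ** P = P" and c: "c * d = 1"
  shows "(P + c *\<^sub>R (mat 1 - P)) ** (P + d *\<^sub>R (mat 1 - P)) = mat 1"
proof -
  have a: "P ** (mat 1 - P) = 0" using PP by (simp add: mm_diff_l)
  have b: "(mat 1 - P) ** P = 0" using PP by (simp add: mm_diff_r)
  have cc: "(mat 1 - P) ** (mat 1 - P) = mat 1 - P" using a by (simp add: mm_diff_r)
  have "(P + c *\<^sub>R (mat 1 - P)) ** (P + d *\<^sub>R (mat 1 - P)) =
        P ** P + d *\<^sub>R (P ** (mat 1 - P)) + c *\<^sub>R ((mat 1 - P) ** P) + (c * d) *\<^sub>R ((mat 1 - P) ** (mat 1 - P))"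
    by (rule exp4)
  also have "\<dots> = mat 1" using PP a b cc c by simp
  finally show ?thesis .
qed

theorem lemma2:
  fixes Q :: "real \<Rightarrow> complex^'n::finite^'n"
    and U :: "complex^'n^'n"
    and F Fx :: "real \<Rightarrow> real \<Rightarrow> complex^'n^'n"
  assumes herm: "\<And>x. x \<ge> 0 \<Longrightarrow> cadj (Q x) = Q x"
    and Qint: "(\<lambda>t. (1 + t) * norm (Q t)) integrable_on {0..}"
    and Qmeas: "Q integrable_on {0..}"
    and unit: "unitary U"
    and novl: "\<not> virtual_level_zero Q U"
    and jost: "\<And>k. k \<noteq> 0 \<Longrightarrow> is_jost Q k (\<lambda>x. F x k) (\<lambda>x. Fx x k)"
  shows "(scattering U F Fx \<longlongrightarrow> Uhat U) at_top"
proof -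
  define n where "n = real CARD('n)"
  have Qabs: "Q absolutely_integrable_on {0..}"
  proof (rule absolutely_integrable_integrable_bound[OF _ Qmeas Qint])
    fix x :: real assume "x \<in> {0..}"
    then show "norm (Q x) \<le> (1 + x) * norm (Q x)" by (simp add: mult_le_cancel_right1)
  qed
  define q where "q = integral {0..} (\<lambda>t. norm (Q t))"
  have JB: "\<forall>i j. cmod (F 0 k $ i $ j - (if i = j then 1 else 0)) \<le> 4 * n * q / \<bar>k\<bar> \<and>
               cmod (Fx 0 k $ i $ j - (if i = j then \<i> * of_real k else 0)) \<le> 4 * n * q"
    if k: "k \<noteq> 0" and big: "4 * n * q \<le> \<bar>k\<bar>" for k
  proof -
    have J: "mat_solution Q k (\<lambda>x. F x k) (\<lambda>x. Fx x k)"
      and lim: "((\<lambda>x. F x k - mat (exp (\<i> * complex_of_real (k * x)))) \<longlongrightarrow> 0) at_top"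
      using jost[OF k] unfolding is_jost_def by auto
    have big': "4 * real CARD('n) * integral {0..} (\<lambda>t. norm (Q t)) \<le> \<bar>k\<bar>"
      using big unfolding n_def q_def .
    show ?thesis using jost_bounds[OF k J lim Qabs order_refl big'] unfolding n_def q_def .
  qed
  define Kz where "Kz = max 1 (4 * n * q)"
  have Kz: "k \<ge> Kz \<Longrightarrow> k \<noteq> 0 \<and> 4 * n * q \<le> \<bar>k\<bar> \<and> 4 * n * q \<le> \<bar>-k\<bar> \<and> -k \<noteq> 0 \<and> k > 0" for k :: real
    unfolding Kz_def by auto
  have L1: "((\<lambda>k. F 0 k) \<longlongrightarrow> mat 1) at_top"
  proof (rule lim_entries[where Kz=Kz and C="4 * n * q"])
    fix k :: real and i j assume "k \<ge> Kz"
    then show "cmod (F 0 k $ i $ j - mat 1 $ i $ j) \<le> 4 * n * q / k"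
      using JB[of k] Kz[of k] by (simp add: mat_def)
  qed
  have L2: "((\<lambda>k. F 0 (-k)) \<longlongrightarrow> mat 1) at_top"
  proof (rule lim_entries[where Kz=Kz and C="4 * n * q"])
    fix k :: real and i j assume "k \<ge> Kz"
    then show "cmod (F 0 (-k) $ i $ j - mat 1 $ i $ j) \<le> 4 * n * q / k"
      using JB[of "-k"] Kz[of k] by (simp add: mat_def)
  qed
  have L3: "((\<lambda>k. (1/k) *\<^sub>R Fx 0 k) \<longlongrightarrow> mat \<i>) at_top"
  proof (rule lim_entries[where Kz=Kz and C="4 * n * q"])
    fix k :: real and i j assume kk: "k \<ge> Kz"
    have e: "((1/k) *\<^sub>R Fx 0 k) $ i $ j - mat \<i> $ i $ j = (Fx 0 k $ i $ j - (if i = j then \<i> * of_real k else 0)) / of_real k"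
    proof -
      have "((1/k) *\<^sub>R Fx 0 k) $ i $ j = of_real (1/k) * Fx 0 k $ i $ j"
        by (simp only: vector_scaleR_component) (simp add: scaleR_conv_of_real)
      then show ?thesis using Kz[OF kk] by (cases "i = j") (auto simp: mat_def field_simps)
    qed
    have "cmod (Fx 0 k $ i $ j - (if i = j then \<i> * of_real k else 0)) \<le> 4 * n * q"
      using JB[of k] Kz[OF kk] by blast
    then show "cmod (((1/k) *\<^sub>R Fx 0 k) $ i $ j - mat \<i> $ i $ j) \<le> 4 * n * q / k"
      unfolding e using Kz[OF kk] by (simp add: norm_divide divide_right_mono)
  qed
  have L4: "((\<lambda>k. (1/k) *\<^sub>R Fx 0 (-k)) \<longlongrightarrow> mat (-\<i>)) at_top"
  proof (rule lim_entries[where Kz=Kz and C="4 * n * q"])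
    fix k :: real and i j assume kk: "k \<ge> Kz"
    have e: "((1/k) *\<^sub>R Fx 0 (-k)) $ i $ j - mat (-\<i>) $ i $ j = (Fx 0 (-k) $ i $ j - (if i = j then \<i> * of_real (-k) else 0)) / of_real k"
    proof -
      have "((1/k) *\<^sub>R Fx 0 (-k)) $ i $ j = of_real (1/k) * Fx 0 (-k) $ i $ j"
        by (simp only: vector_scaleR_component) (simp add: scaleR_conv_of_real)
      then show ?thesis using Kz[OF kk] by (cases "i = j") (auto simp: mat_def field_simps)
    qed
    have "cmod (Fx 0 (-k) $ i $ j - (if i = j then \<i> * of_real (-k) else 0)) \<le> 4 * n * q"
      using JB[of "-k"] Kz[OF kk] by blast
    then show "cmod (((1/k) *\<^sub>R Fx 0 (-k)) $ i $ j - mat (-\<i>) $ i $ j) \<le> 4 * n * q / k"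
      unfolding e using Kz[OF kk] by (simp add: norm_divide divide_right_mono)
  qed
  define P where "P = orth_proj_kerUI U"
  define A where "A = bcA U"
  define B where "B = bcB U"
  have UP: "(U + mat 1) ** P = 0" and PP: "P ** P = P" and PU: "P ** (U + mat 1) = 0"
    and invM: "invertible (P + A)"
    using P_props[OF unit] unfolding P_def A_def by auto
  have AP: "A ** P = 0" unfolding A_def bcA_def by (simp add: matrix_mul_assoc[symmetric] UP)
  have PA: "P ** A = 0"
  proof -
    have "P ** A = (P ** mat (1/2)) ** (U + mat 1)" unfolding A_def bcA_def by (simp add: matrix_mul_assoc)
    also have "\<dots> = mat (1/2) ** (P ** (U + mat 1))" by (simp add: mat_comm[symmetric] matrix_mul_assoc)
    finally show ?thesis by (simp add: PU)
  qed
  have BP: "B ** P = mat (-\<i>) ** P"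
  proof -
    have e: "U - mat 1 = (U + mat 1) - mat 2" by (auto simp: vec_eq_iff mat_def)
    have "(U - mat 1) ** P = (U + mat 1) ** P - mat 2 ** P" unfolding e by (rule mm_diff_r)
    then have "(U - mat 1) ** P = - (mat 2 ** P)" by (simp only: UP diff_0)
    then have "B ** P = - (mat (\<i>/2) ** (mat 2 ** P))" unfolding B_def bcB_def
      by (simp add: matrix_mul_assoc[symmetric] mm_neg_r)
    also have "\<dots> = mat (-\<i>) ** P" by (simp add: matrix_mul_assoc mat_mult mm_neg_l[symmetric] mat_neg)
    finally show ?thesis .
  qed
  define M where "M = P + A"
  define Mi where "Mi = matrix_inv M"
  have MMi: "M ** Mi = mat 1" "Mi ** M = mat 1" using minv_props[OF invM] unfolding M_def Mi_def by auto
  have PMi: "P ** Mi = P"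
  proof -
    have "P ** M = P" unfolding M_def by (simp add: matrix_add_ldistrib PP PA)
    then have "P ** M ** Mi = P ** Mi" by simp
    then show ?thesis by (simp add: matrix_mul_assoc[symmetric] MMi)
  qed
  define \<alpha> where "\<alpha> k = cadj (F 0 k)" for k
  define \<alpha>' where "\<alpha>' k = cadj (F 0 (-k))" for k
  define \<beta> where "\<beta> k = (1/k) *\<^sub>R cadj (Fx 0 k)" for k
  define \<beta>' where "\<beta>' k = (1/k) *\<^sub>R cadj (Fx 0 (-k))" for k
  have l\<alpha>: "(\<alpha> \<longlongrightarrow> mat 1) at_top" unfolding \<alpha>_def using tendsto_cadj[OF L1] by (simp add: cadj_mat)
  have l\<alpha>': "(\<alpha>' \<longlongrightarrow> mat 1) at_top" unfolding \<alpha>'_def using tendsto_cadj[OF L2] by (simp add: cadj_mat)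
  have l\<beta>: "(\<beta> \<longlongrightarrow> mat (-\<i>)) at_top" unfolding \<beta>_def using tendsto_cadj[OF L3] by (simp add: cadj_mat cadj_scaleR)
  have l\<beta>': "(\<beta>' \<longlongrightarrow> mat \<i>) at_top" unfolding \<beta>'_def using tendsto_cadj[OF L4] by (simp add: cadj_mat cadj_scaleR)
  have inv0: "((\<lambda>k::real. 1/k) \<longlongrightarrow> 0) at_top"
    by (rule tendsto_divide_0[OF tendsto_const filterlim_at_top_imp_at_infinity[OF filterlim_ident]])
  define NJ where "NJ k = \<alpha> k ** (B ** P) + (1/k) *\<^sub>R (\<alpha> k ** (B ** (mat 1 - P))) - \<beta> k ** A" for k
  define DJ where "DJ k = \<alpha>' k ** (B ** P) + (1/k) *\<^sub>R (\<alpha>' k ** (B ** (mat 1 - P))) - \<beta>' k ** A" for k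
  have lNJ: "(NJ \<longlongrightarrow> mat 1 ** (B ** P) + 0 *\<^sub>R (mat 1 ** (B ** (mat 1 - P))) - mat (-\<i>) ** A) at_top"
    unfolding NJ_def by (intro tendsto_intros tendsto_mm l\<alpha> l\<beta> inv0)
  have lDJ: "(DJ \<longlongrightarrow> mat 1 ** (B ** P) + 0 *\<^sub>R (mat 1 ** (B ** (mat 1 - P))) - mat \<i> ** A) at_top"
    unfolding DJ_def by (intro tendsto_intros tendsto_mm l\<alpha>' l\<beta>' inv0)
  have DJinf: "mat 1 ** (B ** P) + 0 *\<^sub>R (mat 1 ** (B ** (mat 1 - P))) - mat \<i> ** A = mat (-\<i>) ** M"
    unfolding M_def BP by (simp add: matrix_add_ldistrib mat_neg[symmetric] mm_neg_l)
  have NJinf: "mat 1 ** (B ** P) + 0 *\<^sub>R (mat 1 ** (B ** (mat 1 - P))) - mat (-\<i>) ** A = mat (-\<i>) ** (P - A)"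
    unfolding BP by (simp add: mm_diff_l)
  have DJinv: "(mat (-\<i>) ** M) ** (Mi ** mat \<i>) = mat 1"
  proof -
    have "(mat (-\<i>) ** M) ** (Mi ** mat \<i>) = mat (-\<i>) ** (M ** Mi) ** mat \<i>"
      by (simp add: matrix_mul_assoc)
    also have "\<dots> = mat 1" by (simp add: MMi mat_mult)
    finally show ?thesis .
  qed
  have detL: "det (mat (-\<i>) ** M) \<noteq> 0"
    using minv_unique(1)[OF DJinv] invertible_det_nz by blast
  have minvL: "matrix_inv (mat (-\<i>) ** M) = Mi ** mat \<i>" by (rule minv_unique(2)[OF DJinv])
  have lDJ': "(DJ \<longlongrightarrow> mat (-\<i>) ** M) at_top" using lDJ unfolding DJinf .
  have evinv: "eventually (\<lambda>k. invertible (DJ k)) at_top" by (rule tendsto_minv(1)[OF lDJ' detL])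
  have linv: "((\<lambda>k. matrix_inv (DJ k)) \<longlongrightarrow> Mi ** mat \<i>) at_top"
    using tendsto_minv(2)[OF lDJ' detL] unfolding minvL .
  have lS: "((\<lambda>k. - (NJ k ** matrix_inv (DJ k))) \<longlongrightarrow> - ((mat (-\<i>) ** (P - A)) ** (Mi ** mat \<i>))) at_top"
    using lNJ unfolding NJinf by (intro tendsto_minus tendsto_mm linv)
  have limval: "- ((mat (-\<i>) ** (P - A)) ** (Mi ** mat \<i>)) = Uhat U"
  proof -
    have eqPA: "P - A = mat 2 ** P - M" unfolding M_def mat_mm by (simp add: vec_eq_iff)
    have "(mat (-\<i>) ** (P - A)) ** (Mi ** mat \<i>) = mat (-\<i>) ** ((P - A) ** Mi) ** mat \<i>"
      by (simp add: matrix_mul_assoc)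
    also have "\<dots> = (P - A) ** Mi" by (simp add: mat_comm[of _ "(P - A) ** Mi"] matrix_mul_assoc[symmetric] mat_mult)
    also have "\<dots> = mat 2 ** P - mat 1"
      unfolding eqPA by (simp add: mm_diff_r matrix_mul_assoc[symmetric] PMi MMi)
    finally have "(mat (-\<i>) ** (P - A)) ** (Mi ** mat \<i>) = mat 2 ** P - mat 1" .
    then show ?thesis unfolding Uhat_def P_def[symmetric] by simp
  qed
  have ev: "eventually (\<lambda>k. scattering U F Fx k = - (NJ k ** matrix_inv (DJ k))) at_top"
    using evinv eventually_gt_at_top[of 0]
  proof eventually_elim
    case (elim k)
    then have k0: "k > 0" and iDJ: "invertible (DJ k)" by auto
    define Jm where "Jm = P + (1/k) *\<^sub>R (mat 1 - P)"
    define Ji where "Ji = P + k *\<^sub>R (mat 1 - P)"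
    have JJ: "Jm ** Ji = mat 1" unfolding Jm_def Ji_def by (rule J_inv[OF PP]) (use k0 in simp)
    define N where "N = cadj (F 0 k) ** B - cadj (Fx 0 k) ** A"
    define D where "D = cadj (F 0 (-k)) ** B - cadj (Fx 0 (-k)) ** A"
    have NJk: "N ** Jm = NJ k" unfolding N_def Jm_def NJ_def \<alpha>_def \<beta>_def by (rule NJ_alg[OF AP])
    have DJk: "D ** Jm = DJ k" unfolding D_def Jm_def DJ_def \<alpha>'_def \<beta>'_def by (rule NJ_alg[OF AP])
    have "D ** (Jm ** matrix_inv (DJ k)) = mat 1"
      by (simp add: matrix_mul_assoc DJk minv_props(1)[OF iDJ])
    then have "matrix_inv D = Jm ** matrix_inv (DJ k)" by (rule minv_unique(2))
    then have "scattering U F Fx k = - (N ** (Jm ** matrix_inv (DJ k)))"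
      unfolding scattering_def N_def D_def A_def B_def by simp
    also have "\<dots> = - (NJ k ** matrix_inv (DJ k))" by (simp add: matrix_mul_assoc NJk)
    finally show ?case .
  qed
  show ?thesis using Lim_transform_eventually[OF lS ev[THEN eventually_mono]] limval by auto
qed

end
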